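(* Assume (A1)–(A3) below and $\mathbb E[Y_i^2]<\infty$. For any $\omega\in\Delta^{L-1}$: (a) $\hat\beta_{RT}(\omega)\xrightarrow{p}\beta^*(\omega)=\sum_{\ell=1}^L\omega_\ell\mathrm{Wald}_\ell$; (b) $\sqrt n(\hat\beta_{RT}(\omega)-\beta^*(\omega))\xrightarrow{d}N(0,V_{RT}(\omega))$ with $V_{RT}(\omega)=\omega'\Gamma^{Wald}\omega$, where $$\Gamma^{Wald}_{\ell k}=\frac{\mathbb E[\tilde\epsilon_{i,\ell}\tilde\epsilon_{i,k}(Z_{\ell i}-p_\ell)(Z_{ki}-p_k)]}{\gamma_\ell\gamma_k},$$ $\tilde\epsilon_{i,\ell}=Y_i-\mathrm{Wald}_\ell D_i-c_\ell$ and $c_\ell=\mathbb E[Y_i]-\mathrm{Wald}_\ell\mathbb E[D_i]$.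
   Context: Observe an i.i.d. sample $\{(Y_i,D_i,\mathbf Z_i)\}_{i=1}^n$, $Y_i\in\mathbb R$, $D_i\in\{0,1\}$, $\mathbf Z_i=(Z_{1i},\dots,Z_{Li})'\in\{0,1\}^L$, $L\ge2$; potential outcomes $Y_i(0),Y_i(1)$, compliance type $D_i(\cdot):\{0,1\}^L\to\{0,1\}$, $D_i=D_i(\mathbf Z_i)$, $Y_i=D_iY_i(1)+(1-D_i)Y_i(0)$. $p_\ell=P(Z_{\ell i}=1)$, $\pi_\ell,\rho_\ell$ the differences of $\mathbb E[D_i\mid Z_{\ell i}=z]$, $\mathbb E[Y_i\mid Z_{\ell i}=z]$ between $z=1,0$, $\mathrm{Wald}_\ell=\rho_\ell/\pi_\ell$, $\gamma_\ell=\mathrm{Cov}(D_i,Z_{\ell i})=\pi_\ell p_\ell(1-p_\ell)$, $\Sigma_Z=\mathrm{Var}(\mathbf Z_i)$. $\widehat{\mathrm{Wald}}_\ell=\widehat{\mathrm{Cov}}(Y_i,Z_{\ell i})/\widehat{\mathrm{Cov}}(D_i,Z_{\ell i})$ (sample covariances). For $\omega$ in the simplex $\Delta^{L-1}=\{\omega\in\mathbb R^L:\omega\ge0,\sum\omega_\ell=1\}$, the representative targeting estimator is $\hat\beta_{RT}(\omega)=\sum_\ell\omega_\ell\widehat{\mathrm{Wald}}_\ell$. Assumptions: (A1) $(Y_i(0),Y_i(1),D_i(\cdot))$ independent of $\mathbf Z_i$. (A2) $D_i(z)$ nondecreasing in each coordinate for every $i$. (A3) $p_\ell>0$, $\pi_\ell>0$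 for all $\ell$; $\Sigma_Z$ positive definite. *)

theory Defs
  imports "HOL-Probability.Probability"
begin

text \<open>A unit u of type 'u carries potential outcomes y0 u, y1 u,
  a compliance type dt u :: nat set => bool (the treatment taken under the instrument
  vector z, encoded as the set of switched-on instruments, a subset of {..<L}),
  and the realised instrument vector zz u (a subset of {..<L}).
  The i.i.d. sample is the infinite product (PiM UNIV (%_. P)), unit i = omega i.\<close>

definition Zl :: "('u \<Rightarrow> nat set) \<Rightarrow> nat \<Rightarrow> 'u \<Rightarrow> real" where
  "Zl zz l u = (if l \<in> zz u then 1 else 0)"

definition obsD :: "('u \<Rightarrow> nat set \<Rightarrow> bool) \<Rightarrow> ('u \<Rightarrow> nat set) \<Rightarrow> 'u \<Rightarrow> real" where
  "obsD dt zz u = (if dt u (zz u) then 1 else 0)"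

definition obsY :: "('u \<Rightarrow> real) \<Rightarrow> ('u \<Rightarrow> real) \<Rightarrow> ('u \<Rightarrow> nat set \<Rightarrow> bool)
    \<Rightarrow> ('u \<Rightarrow> nat set) \<Rightarrow> 'u \<Rightarrow> real" where
  "obsY y0 y1 dt zz u = obsD dt zz u * y1 u + (1 - obsD dt zz u) * y0 u"

text \<open>E[f | A] for an event A of positive probability.\<close>
definition cond_mean :: "'u measure \<Rightarrow> ('u \<Rightarrow> real) \<Rightarrow> 'u set \<Rightarrow> real" where
  "cond_mean P f A = (\<integral>u. indicator A u * f u \<partial>P) / measure P A"

definition cov :: "'u measure \<Rightarrow> ('u \<Rightarrow> real) \<Rightarrow> ('u \<Rightarrow> real) \<Rightarrow> real" where
  "cov P f g = (\<integral>u. f u * g u \<partial>P) - (\<integral>u. f u \<partial>P) * (\<integral>u. g u \<partial>P)"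

definition p_inst :: "'u measure \<Rightarrow> ('u \<Rightarrow> nat set) \<Rightarrow> nat \<Rightarrow> real" where
  "p_inst P zz l = measure P {u \<in> space P. l \<in> zz u}"

text \<open>difference of E[f | Z_l = 1] and E[f | Z_l = 0] (gives pi_l for f = D, rho_l for f = Y)\<close>
definition mean_diff :: "'u measure \<Rightarrow> ('u \<Rightarrow> nat set) \<Rightarrow> ('u \<Rightarrow> real) \<Rightarrow> nat \<Rightarrow> real" where
  "mean_diff P zz f l = cond_mean P f {u \<in> space P. l \<in> zz u}
                        - cond_mean P f {u \<in> space P. l \<notin> zz u}"

definition wald :: "'u measure \<Rightarrow> ('u \<Rightarrow> real) \<Rightarrow> ('u \<Rightarrow> real) \<Rightarrow> ('u \<Rightarrow> nat set
    \<Rightarrow> bool) \<Rightarrow> ('u \<Rightarrow> nat set) \<Rightarrow> nat \<Rightarrow> real" where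
  "wald P y0 y1 dt zz l = mean_diff P zz (obsY y0 y1 dt zz) l / mean_diff P zz (obsD dt zz) l"

definition samp_cov :: "nat \<Rightarrow> (nat \<Rightarrow> real) \<Rightarrow> (nat \<Rightarrow> real) \<Rightarrow> real" where
  "samp_cov n x z = (\<Sum>i<n. x i * z i) / real n - ((\<Sum>i<n. x i) / real n) * ((\<Sum>i<n. z i) / real n)"

definition beta_RT :: "nat \<Rightarrow> (nat \<Rightarrow> real) \<Rightarrow> ('u \<Rightarrow> real) \<Rightarrow> ('u \<Rightarrow> real)
    \<Rightarrow> ('u \<Rightarrow> nat set \<Rightarrow> bool) \<Rightarrow> ('u \<Rightarrow> nat set) \<Rightarrow> nat \<Rightarrow> (nat \<Rightarrow> 'u) \<Rightarrow> real" where
  "beta_RT L w y0 y1 dt zz n \<omega> =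
     (\<Sum>l<L. w l * (samp_cov n (\<lambda>i. obsY y0 y1 dt zz (\<omega> i)) (\<lambda>i. Zl zz l (\<omega> i))
                   / samp_cov n (\<lambda>i. obsD dt zz (\<omega> i)) (\<lambda>i. Zl zz l (\<omega> i))))"

definition Gamma_wald :: "'u measure \<Rightarrow> ('u \<Rightarrow> real) \<Rightarrow> ('u \<Rightarrow> real) \<Rightarrow> ('u \<Rightarrow> nat set
    \<Rightarrow> bool) \<Rightarrow> ('u \<Rightarrow> nat set) \<Rightarrow> nat \<Rightarrow> nat \<Rightarrow> real" where
  "Gamma_wald P y0 y1 dt zz l k =
     (let Y = obsY y0 y1 dt zz; D = obsD dt zz;
          c = (\<lambda>j. (\<integral>u. Y u \<partial>P) - wald P y0 y1 dt zz j * (\<integral>u. D u \<partial>P));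
          eps = (\<lambda>j u. Y u - wald P y0 y1 dt zz j * D u - c j)
      in (\<integral>u. eps l u * eps k u * (Zl zz l u - p_inst P zz l) * (Zl zz k u - p_inst P zz k) \<partial>P)
         / (cov P D (Zl zz l) * cov P D (Zl zz k)))"

definition conv_in_prob :: "'a measure \<Rightarrow> (nat \<Rightarrow> 'a \<Rightarrow> real) \<Rightarrow> real \<Rightarrow> bool" where
  "conv_in_prob M X c \<longleftrightarrow>
     (\<forall>e>0. (\<lambda>n. measure M {x \<in> space M. \<bar>X n x - c\<bar> > e}) \<longlonglongrightarrow> 0)"

definition normal_measure :: "real \<Rightarrow> real measure" where
  "normal_measure v = (if v = 0 then return borel 0 else density lborel (normal_density 0 (sqrt v)))"

definition gen_sigma :: "'u measure \<Rightarrow> 'b measure \<Rightarrow> ('u \<Rightarrow> 'b) \<Rightarrow> 'u set set" where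
  "gen_sigma P Mx X = sigma_sets (space P) {X -` A \<inter> space P | A. A \<in> sets Mx}"

end

theory Submission
  imports Defs "HOL-Probability.Probability"
begin

lemma coord_distr:
  assumes P: "prob_space P"
  shows "distr (PiM UNIV (\<lambda>_. P)) P (\<lambda>\<omega>. \<omega> i) = P"
  using distr_PiM_component[of UNIV "\<lambda>_. P" i] P by simp

lemma coord_integral:
  fixes g :: "'u \<Rightarrow> real"
  assumes P: "prob_space P" and g: "g \<in> borel_measurable P"
  shows "(\<integral>\<omega>. g (\<omega> i) \<partial>PiM UNIV (\<lambda>_. P)) = (\<integral>u. g u \<partial>P)"
    and "integrable (PiM UNIV (\<lambda>_. P)) (\<lambda>\<omega>. g (\<omega> i)) \<longleftrightarrow> integrable P g"
proof -
  have m: "(\<lambda>\<omega>. \<omega> i) \<in> measurable (PiM UNIV (\<lambda>_. P)) P"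
    by (rule measurable_component_singleton) simp
  show "(\<integral>\<omega>. g (\<omega> i) \<partial>PiM UNIV (\<lambda>_. P)) = (\<integral>u. g u \<partial>P)"
    using integral_distr[of "\<lambda>\<omega>. \<omega> i" "PiM UNIV (\<lambda>_. P)" P g] m g coord_distr[OF P, of i] by simp
  show "integrable (PiM UNIV (\<lambda>_. P)) (\<lambda>\<omega>. g (\<omega> i)) \<longleftrightarrow> integrable P g"
    using integrable_distr_eq[of "\<lambda>\<omega>. \<omega> i" "PiM UNIV (\<lambda>_. P)" P g] m g coord_distr[OF P, of i] by simp
qed

lemma coord_indep_var:
  assumes P: "prob_space P" and ij: "i \<noteq> j"
  shows "prob_space.indep_var (PiM UNIV (\<lambda>_. P)) P (\<lambda>\<omega>. \<omega> i) P (\<lambda>\<omega>. \<omega> j)"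
proof -
  interpret M: prob_space "PiM UNIV (\<lambda>_. P)"
    using P by (intro prob_space_PiM) auto
  define f where "f = (\<lambda>b::bool. if b then i else j)"
  have inj: "inj_on f UNIV" using ij by (auto simp: f_def inj_on_def split: if_splits)
  have cb: "case_bool P P = (\<lambda>_. P)" by (auto simp: fun_eq_iff split: bool.split)
  have rv: "\<And>b. M.random_variable (case_bool P P b) (case_bool (\<lambda>\<omega>. \<omega> i) (\<lambda>\<omega>. \<omega> j) b)"
  proof -
    have "(\<lambda>\<omega>. \<omega> k) \<in> measurable (PiM UNIV (\<lambda>_. P)) P" for k
      using measurable_component_singleton[of k UNIV "\<lambda>_. P"] by simp
    then show "\<And>b. M.random_variable (case_bool P P b) (case_bool (\<lambda>\<omega>. \<omega> i) (\<lambda>\<omega>. \<omega> j) b)"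
      by (auto split: bool.split)
  qed
  have eq1: "(\<lambda>x. \<lambda>b\<in>UNIV. case_bool (\<lambda>\<omega>. \<omega> i) (\<lambda>\<omega>. \<omega> j) b x) = (\<lambda>\<omega>. \<lambda>n\<in>UNIV. \<omega> (f n))"
    by (auto simp: fun_eq_iff f_def split: bool.split)
  have eq2: "PiM UNIV (\<lambda>b. distr (PiM UNIV (\<lambda>_. P)) (case_bool P P b) (case_bool (\<lambda>\<omega>. \<omega> i) (\<lambda>\<omega>. \<omega> j) b)) = PiM UNIV (\<lambda>b. P)"
    by (rule PiM_cong) (auto split: bool.split simp: coord_distr[OF P])
  have eq3: "distr (PiM UNIV (\<lambda>_. P)) (PiM UNIV (\<lambda>b. P)) (\<lambda>\<omega>. \<lambda>n\<in>UNIV. \<omega> (f n)) = PiM UNIV (\<lambda>b. P)"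
    using distr_PiM_reindex[of UNIV "\<lambda>_. P" f UNIV] P inj by simp
  have "distr (PiM UNIV (\<lambda>_. P)) (PiM UNIV (case_bool P P)) (\<lambda>x. \<lambda>b\<in>UNIV. case_bool (\<lambda>\<omega>. \<omega> i) (\<lambda>\<omega>. \<omega> j) b x)
     = PiM UNIV (\<lambda>b. distr (PiM UNIV (\<lambda>_. P)) (case_bool P P b) (case_bool (\<lambda>\<omega>. \<omega> i) (\<lambda>\<omega>. \<omega> j) b))"
    unfolding eq2 unfolding eq1 cb by (rule eq3)
  note key = this
  show ?thesis
    unfolding M.indep_var_def
    by (subst M.indep_vars_iff_distr_eq_PiM[OF _ rv]) (rule key | simp)+
qed

lemma sum_sq_moment:
  assumes P: "prob_space P" and f: "f \<in> borel_measurable P"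
    and f2: "integrable P (\<lambda>u. (f u)\<^sup>2)" and f0: "(\<integral>u. f u \<partial>P) = 0"
  shows "integrable (PiM UNIV (\<lambda>_. P)) (\<lambda>\<omega>. (\<Sum>i<n. f (\<omega> i))\<^sup>2)"
    and "(\<integral>\<omega>. (\<Sum>i<n. f (\<omega> i))\<^sup>2 \<partial>PiM UNIV (\<lambda>_. P)) = real n * (\<integral>u. (f u)\<^sup>2 \<partial>P)"
proof -
  interpret P: prob_space P by (rule P)
  interpret M: prob_space "PiM UNIV (\<lambda>_. P)"
    using P by (intro prob_space_PiM) auto
  have f1: "integrable P f" using P.square_integrable_imp_integrable[OF f f2] .
  have mi: "(\<lambda>\<omega>. f (\<omega> i)) \<in> borel_measurable (PiM UNIV (\<lambda>_. P))" for i
    using f by measurable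
  have int1: "integrable (PiM UNIV (\<lambda>_. P)) (\<lambda>\<omega>. f (\<omega> i))" for i
    using coord_integral(2)[OF P f, of i] f1 by simp
  have f2m: "(\<lambda>u. (f u)\<^sup>2) \<in> borel_measurable P" using f by measurable
  have int2: "integrable (PiM UNIV (\<lambda>_. P)) (\<lambda>\<omega>. f (\<omega> i) * f (\<omega> j))" for i j
  proof (cases "i = j")
    case True
    then show ?thesis using coord_integral(2)[OF P f2m, of i] f2 by (simp add: power2_eq_square)
  next
    case False
    have "prob_space.indep_var (PiM UNIV (\<lambda>_. P)) borel (f \<circ> (\<lambda>\<omega>. \<omega> i)) borel (f \<circ> (\<lambda>\<omega>. \<omega> j))"
      by (rule M.indep_var_compose[OF coord_indep_var[OF P False] f f])
    then show ?thesis using M.indep_var_integrable[OF _ int1 int1] by (simp add: comp_def)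
  qed
  have val: "(\<integral>\<omega>. f (\<omega> i) * f (\<omega> j) \<partial>PiM UNIV (\<lambda>_. P)) = (if i = j then (\<integral>u. (f u)\<^sup>2 \<partial>P) else 0)" for i j
  proof (cases "i = j")
    case True
    then show ?thesis using coord_integral(1)[OF P f2m, of i] by (simp add: power2_eq_square)
  next
    case False
    have "prob_space.indep_var (PiM UNIV (\<lambda>_. P)) borel (f \<circ> (\<lambda>\<omega>. \<omega> i)) borel (f \<circ> (\<lambda>\<omega>. \<omega> j))"
      by (rule M.indep_var_compose[OF coord_indep_var[OF P False] f f])
    then have "(\<integral>\<omega>. f (\<omega> i) * f (\<omega> j) \<partial>PiM UNIV (\<lambda>_. P)) = (\<integral>\<omega>. f (\<omega> i) \<partial>PiM UNIV (\<lambda>_. P)) * (\<integral>\<omega>. f (\<omega> j) \<partial>PiM UNIV (\<lambda>_. P))"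
      using M.indep_var_lebesgue_integral[OF _ int1 int1] by (simp add: comp_def)
    then show ?thesis using False f0 by (simp add: coord_integral(1)[OF P f])
  qed
  have sq: "(\<Sum>i<n. f (\<omega> i))\<^sup>2 = (\<Sum>i<n. \<Sum>j<n. f (\<omega> i) * f (\<omega> j))" for \<omega>
    by (simp add: power2_eq_square sum_product)
  show "integrable (PiM UNIV (\<lambda>_. P)) (\<lambda>\<omega>. (\<Sum>i<n. f (\<omega> i))\<^sup>2)"
    unfolding sq by (intro Bochner_Integration.integrable_sum int2)
  have "(\<integral>\<omega>. (\<Sum>i<n. f (\<omega> i))\<^sup>2 \<partial>PiM UNIV (\<lambda>_. P)) = (\<Sum>i<n. (\<integral>\<omega>. (\<Sum>j<n. f (\<omega> i) * f (\<omega> j)) \<partial>PiM UNIV (\<lambda>_. P)))"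
    unfolding sq by (rule Bochner_Integration.integral_sum) (intro Bochner_Integration.integrable_sum int2)
  also have "\<dots> = (\<Sum>i<n. \<Sum>j<n. (\<integral>\<omega>. f (\<omega> i) * f (\<omega> j) \<partial>PiM UNIV (\<lambda>_. P)))"
    by (intro sum.cong refl Bochner_Integration.integral_sum int2)
  also have "\<dots> = real n * (\<integral>u. (f u)\<^sup>2 \<partial>P)"
    unfolding val by simp
  finally show "(\<integral>\<omega>. (\<Sum>i<n. f (\<omega> i))\<^sup>2 \<partial>PiM UNIV (\<lambda>_. P)) = real n * (\<integral>u. (f u)\<^sup>2 \<partial>P)" .
qed

lemma sum_cheb:
  assumes P: "prob_space P" and f: "f \<in> borel_measurable P"
    and f2: "integrable P (\<lambda>u. (f u)\<^sup>2)" and f0: "(\<integral>u. f u \<partial>P) = 0" and t: "t > 0"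
  shows "measure (PiM UNIV (\<lambda>_. P)) {\<omega> \<in> space (PiM UNIV (\<lambda>_. P)). \<bar>\<Sum>i<n. f (\<omega> i)\<bar> \<ge> t}
           \<le> real n * (\<integral>u. (f u)\<^sup>2 \<partial>P) / t\<^sup>2"
proof -
  interpret P: prob_space P by (rule P)
  interpret M: prob_space "PiM UNIV (\<lambda>_. P)"
    using P by (intro prob_space_PiM) auto
  have f1: "integrable P f" using P.square_integrable_imp_integrable[OF f f2] .
  have mi[measurable]: "(\<lambda>\<omega>. \<Sum>i<n. f (\<omega> i)) \<in> borel_measurable (PiM UNIV (\<lambda>_. P))"
    using f by measurable
  have int1: "integrable (PiM UNIV (\<lambda>_. P)) (\<lambda>\<omega>. f (\<omega> i))" for i
    using coord_integral(2)[OF P f, of i] f1 by simp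
  have "M.expectation (\<lambda>\<omega>. \<Sum>i<n. f (\<omega> i)) = (\<Sum>i<n. M.expectation (\<lambda>\<omega>. f (\<omega> i)))"
    by (rule Bochner_Integration.integral_sum) (rule int1)
  then have e0: "M.expectation (\<lambda>\<omega>. \<Sum>i<n. f (\<omega> i)) = 0"
    using f0 by (simp add: coord_integral(1)[OF P f] del: Bochner_Integration.integral_sum)
  have "M.prob {\<omega> \<in> space (PiM UNIV (\<lambda>_. P)). \<bar>(\<Sum>i<n. f (\<omega> i)) - M.expectation (\<lambda>\<omega>. \<Sum>i<n. f (\<omega> i))\<bar> \<ge> t}
     \<le> M.variance (\<lambda>\<omega>. \<Sum>i<n. f (\<omega> i)) / t\<^sup>2"
    by (rule M.Chebyshev_inequality[OF mi _ t]) (use sum_sq_moment(1)[OF P f f2 f0] in simp)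
  then show ?thesis using e0 sum_sq_moment(2)[OF P f f2 f0, of n] by simp
qed


definition negl :: "'a measure \<Rightarrow> (nat \<Rightarrow> 'a \<Rightarrow> real) \<Rightarrow> bool" where
  "negl M X \<longleftrightarrow> (\<forall>e>0. \<forall>\<delta>>0. \<exists>N. \<forall>n\<ge>N. \<exists>B\<in>sets M.
      {x\<in>space M. \<bar>X n x\<bar> > e} \<subseteq> B \<and> measure M B \<le> \<delta>)"

lemma neglD:
  assumes "negl M X" "e > 0" "\<delta> > 0"
  shows "\<exists>N. \<forall>n\<ge>N. \<exists>B\<in>sets M. {x\<in>space M. \<bar>X n x\<bar> > e} \<subseteq> B \<and> measure M B \<le> \<delta>"
  using assms unfolding negl_def by blast

lemma negl_conv_in_prob:
  assumes M: "finite_measure M" and X: "negl M (\<lambda>n x. X n x - c)"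
  shows "conv_in_prob M X c"
  unfolding conv_in_prob_def
proof (intro allI impI)
  fix e :: real assume e: "e > 0"
  show "(\<lambda>n. measure M {x \<in> space M. \<bar>X n x - c\<bar> > e}) \<longlonglongrightarrow> 0"
  proof (rule LIMSEQ_I)
    fix r :: real assume r: "r > 0"
    from neglD[OF X e, of "r/2"] r obtain N where
      N: "\<forall>n\<ge>N. \<exists>B\<in>sets M. {x\<in>space M. \<bar>X n x - c\<bar> > e} \<subseteq> B \<and> measure M B \<le> r/2" by auto
    have "norm (measure M {x \<in> space M. \<bar>X n x - c\<bar> > e} - 0) < r" if n: "n \<ge> N" for n
    proof -
      from N n obtain B where B: "B \<in> sets M" "{x\<in>space M. \<bar>X n x - c\<bar> > e} \<subseteq> B" "measure M B \<le> r/2" by auto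
      have "measure M {x \<in> space M. \<bar>X n x - c\<bar> > e} \<le> measure M B"
        using finite_measure.finite_measure_mono[OF M B(2) B(1)] .
      then show ?thesis using B(3) r by simp
    qed
    then show "\<exists>N. \<forall>n\<ge>N. norm (measure M {x \<in> space M. \<bar>X n x - c\<bar> > e} - 0) < r" by blast
  qed
qed

lemma negl_add:
  assumes M: "finite_measure M" and X: "negl M X" and Y: "negl M Y"
  shows "negl M (\<lambda>n x. X n x + Y n x)"
  unfolding negl_def
proof (intro allI impI)
  fix e \<delta> :: real assume e: "e > 0" and d: "\<delta> > 0"
  from neglD[OF X, of "e/2" "\<delta>/2"] e d obtain N1 where
    N1: "\<forall>n\<ge>N1. \<exists>B\<in>sets M. {x\<in>space M. \<bar>X n x\<bar> > e/2} \<subseteq> B \<and> measure M B \<le> \<delta>/2" by auto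
  from neglD[OF Y, of "e/2" "\<delta>/2"] e d obtain N2 where
    N2: "\<forall>n\<ge>N2. \<exists>B\<in>sets M. {x\<in>space M. \<bar>Y n x\<bar> > e/2} \<subseteq> B \<and> measure M B \<le> \<delta>/2" by auto
  have "\<exists>B\<in>sets M. {x\<in>space M. \<bar>X n x + Y n x\<bar> > e} \<subseteq> B \<and> measure M B \<le> \<delta>" if n: "n \<ge> max N1 N2" for n
  proof -
    from N1 n obtain B1 where B1: "B1 \<in> sets M" "{x\<in>space M. \<bar>X n x\<bar> > e/2} \<subseteq> B1" "measure M B1 \<le> \<delta>/2" by auto
    from N2 n obtain B2 where B2: "B2 \<in> sets M" "{x\<in>space M. \<bar>Y n x\<bar> > e/2} \<subseteq> B2" "measure M B2 \<le> \<delta>/2" by auto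
    have "{x\<in>space M. \<bar>X n x + Y n x\<bar> > e} \<subseteq> B1 \<union> B2"
    proof
      fix x assume x: "x \<in> {x\<in>space M. \<bar>X n x + Y n x\<bar> > e}"
      then have "\<bar>X n x\<bar> > e/2 \<or> \<bar>Y n x\<bar> > e/2" by auto
      then show "x \<in> B1 \<union> B2" using x B1(2) B2(2) by auto
    qed
    moreover have "measure M (B1 \<union> B2) \<le> \<delta>"
      using measure_Un_le[OF B1(1) B2(1)] B1(3) B2(3) by simp
    ultimately show ?thesis using B1(1) B2(1) by blast
  qed
  then show "\<exists>N. \<forall>n\<ge>N. \<exists>B\<in>sets M. {x\<in>space M. \<bar>X n x + Y n x\<bar> > e} \<subseteq> B \<and> measure M B \<le> \<delta>" by blast
qed

lemma negl_scale:
  assumes X: "negl M X"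
  shows "negl M (\<lambda>n x. a * X n x)"
  unfolding negl_def
proof (intro allI impI)
  fix e \<delta> :: real assume e: "e > 0" and d: "\<delta> > 0"
  have e': "e / (\<bar>a\<bar> + 1) > 0" using e by (simp add: add_pos_nonneg)
  from neglD[OF X e' d] obtain N where
    N: "\<forall>n\<ge>N. \<exists>B\<in>sets M. {x\<in>space M. \<bar>X n x\<bar> > e / (\<bar>a\<bar> + 1)} \<subseteq> B \<and> measure M B \<le> \<delta>" by auto
  have "{x\<in>space M. \<bar>a * X n x\<bar> > e} \<subseteq> {x\<in>space M. \<bar>X n x\<bar> > e / (\<bar>a\<bar> + 1)}" for n
  proof safe
    fix x assume "x \<in> space M" "e < \<bar>a * X n x\<bar>"
    moreover have "\<bar>a * X n x\<bar> \<le> (\<bar>a\<bar> + 1) * \<bar>X n x\<bar>"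
      by (simp add: abs_mult mult_right_mono)
    ultimately have "e < \<bar>X n x\<bar> * (\<bar>a\<bar> + 1)" by (simp add: mult.commute)
    moreover have "\<bar>a\<bar> + 1 > 0" by (simp add: add_pos_nonneg)
    ultimately show "e / (\<bar>a\<bar> + 1) < \<bar>X n x\<bar>"
      by (simp add: pos_divide_less_eq)
  qed
  then show "\<exists>N. \<forall>n\<ge>N. \<exists>B\<in>sets M. {x\<in>space M. \<bar>a * X n x\<bar> > e} \<subseteq> B \<and> measure M B \<le> \<delta>"
    using N by (meson order_trans)
qed

lemma negl_zero: "negl M (\<lambda>n x. 0)"
  unfolding negl_def by (intro allI impI exI[of _ 0]) (auto intro!: bexI[of _ "{}"])

lemma negl_sum:
  assumes M: "finite_measure M" and fin: "finite I" and R: "\<And>l. l \<in> I \<Longrightarrow> negl M (R l)"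
  shows "negl M (\<lambda>n x. \<Sum>l\<in>I. a l * R l n x)"
  using fin R
proof (induction I rule: finite_induct)
  case empty
  then show ?case using negl_zero by simp
next
  case (insert l I)
  have "negl M (\<lambda>n x. a l * R l n x + (\<Sum>l\<in>I. a l * R l n x))"
    by (rule negl_add[OF M negl_scale]) (use insert in auto)
  then show ?case using insert by simp
qed

lemma cdf_distr_eq:
  assumes "X \<in> borel_measurable M"
  shows "cdf (distr M borel X) x = measure M {\<omega>\<in>space M. X \<omega> \<le> x}"
  unfolding cdf_def2 using assms
  by (subst measure_distr) (auto intro!: arg_cong[where f="measure M"])

lemma slutsky:
  assumes M: "prob_space M"
    and Xm: "\<And>n. X n \<in> borel_measurable M" and Ym: "\<And>n. Y n \<in> borel_measurable M"
    and cont: "\<And>x. isCont (cdf \<mu>) x"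
    and conv: "weak_conv_m (\<lambda>n. distr M borel (X n)) \<mu>"
    and ng: "negl M (\<lambda>n x. Y n x - X n x)"
  shows "weak_conv_m (\<lambda>n. distr M borel (Y n)) \<mu>"
  unfolding weak_conv_m_def weak_conv_def
proof (intro allI impI)
  interpret prob_space M by (rule M)
  fix x :: real
  let ?F = "cdf \<mu>"
  have cv: "(\<lambda>n. measure M {\<omega>\<in>space M. X n \<omega> \<le> y}) \<longlonglongrightarrow> ?F y" for y
    using conv cont[of y] unfolding weak_conv_m_def weak_conv_def by (simp add: cdf_distr_eq[OF Xm])
  show "(\<lambda>n. cdf (distr M borel (Y n)) x) \<longlonglongrightarrow> ?F x"
    unfolding cdf_distr_eq[OF Ym]
  proof (rule LIMSEQ_I)
    fix r :: real assume r: "r > 0"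
    from LIM_D[OF cont[of x, unfolded isCont_def], of "r/4"] r
    obtain s where s: "s > 0" "\<And>y. y \<noteq> x \<and> norm (y - x) < s \<longrightarrow> norm (?F y - ?F x) < r/4" by auto
    define d where "d = s/2"
    have d: "d > 0" using s by (simp add: d_def)
    have Fp: "\<bar>?F (x + d) - ?F x\<bar> < r/4" using s(2)[of "x+d"] d by (simp add: d_def)
    have Fm: "\<bar>?F (x - d) - ?F x\<bar> < r/4" using s(2)[of "x-d"] d by (simp add: d_def)
    from LIMSEQ_D[OF cv[of "x+d"], of "r/4"] r obtain N1 where
      N1: "\<And>n. n \<ge> N1 \<Longrightarrow> norm (measure M {\<omega>\<in>space M. X n \<omega> \<le> x + d} - ?F (x+d)) < r/4" by auto
    from LIMSEQ_D[OF cv[of "x-d"], of "r/4"] r obtain N2 where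
      N2: "\<And>n. n \<ge> N2 \<Longrightarrow> norm (measure M {\<omega>\<in>space M. X n \<omega> \<le> x - d} - ?F (x-d)) < r/4" by auto
    from neglD[OF ng d, of "r/4"] r obtain N3 where
      N3: "\<forall>n\<ge>N3. \<exists>B\<in>sets M. {\<omega>\<in>space M. \<bar>Y n \<omega> - X n \<omega>\<bar> > d} \<subseteq> B \<and> measure M B \<le> r/4" by auto
    have "norm (measure M {\<omega>\<in>space M. Y n \<omega> \<le> x} - ?F x) < r" if n: "n \<ge> max N1 (max N2 N3)" for n
    proof -
      from N3 n obtain B where B: "B \<in> sets M" "{\<omega>\<in>space M. \<bar>Y n \<omega> - X n \<omega>\<bar> > d} \<subseteq> B" "measure M B \<le> r/4" by auto
      have [measurable]: "X n \<in> borel_measurable M" "Y n \<in> borel_measurable M" using Xm Ym by auto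
      have s1: "{\<omega>\<in>space M. Y n \<omega> \<le> x} \<subseteq> {\<omega>\<in>space M. X n \<omega> \<le> x + d} \<union> B"
      proof
        fix \<omega> assume w: "\<omega> \<in> {\<omega>\<in>space M. Y n \<omega> \<le> x}"
        show "\<omega> \<in> {\<omega>\<in>space M. X n \<omega> \<le> x + d} \<union> B"
        proof (cases "\<bar>Y n \<omega> - X n \<omega>\<bar> > d")
          case True then show ?thesis using w B(2) by blast
        next
          case False then show ?thesis using w by auto
        qed
      qed
      have s2: "{\<omega>\<in>space M. X n \<omega> \<le> x - d} \<subseteq> {\<omega>\<in>space M. Y n \<omega> \<le> x} \<union> B"
      proof
        fix \<omega> assume w: "\<omega> \<in> {\<omega>\<in>space M. X n \<omega> \<le> x - d}"
        show "\<omega> \<in> {\<omega>\<in>space M. Y n \<omega> \<le> x} \<union> B"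
        proof (cases "\<bar>Y n \<omega> - X n \<omega>\<bar> > d")
          case True then show ?thesis using w B(2) by blast
        next
          case False then show ?thesis using w by auto
        qed
      qed
      have m1: "{\<omega>\<in>space M. X n \<omega> \<le> x + d} \<in> sets M" "{\<omega>\<in>space M. Y n \<omega> \<le> x} \<in> sets M"
        "{\<omega>\<in>space M. X n \<omega> \<le> x - d} \<in> sets M" by measurable
      have "measure M {\<omega>\<in>space M. Y n \<omega> \<le> x} \<le> measure M ({\<omega>\<in>space M. X n \<omega> \<le> x + d} \<union> B)"
        by (rule finite_measure_mono[OF s1]) (use m1 B in auto)
      also have "\<dots> \<le> measure M {\<omega>\<in>space M. X n \<omega> \<le> x + d} + measure M B"
        by (rule measure_Un_le) (use m1 B in auto)
      finally have u: "measure M {\<omega>\<in>space M. Y n \<omega> \<le> x} \<le> measure M {\<omega>\<in>space M. X n \<omega> \<le> x + d} + measure M B" .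
      have "measure M {\<omega>\<in>space M. X n \<omega> \<le> x - d} \<le> measure M ({\<omega>\<in>space M. Y n \<omega> \<le> x} \<union> B)"
        by (rule finite_measure_mono[OF s2]) (use m1 B in auto)
      also have "\<dots> \<le> measure M {\<omega>\<in>space M. Y n \<omega> \<le> x} + measure M B"
        by (rule measure_Un_le) (use m1 B in auto)
      finally have l: "measure M {\<omega>\<in>space M. X n \<omega> \<le> x - d} \<le> measure M {\<omega>\<in>space M. Y n \<omega> \<le> x} + measure M B" .
      have a1: "\<bar>measure M {\<omega>\<in>space M. X n \<omega> \<le> x + d} - ?F (x+d)\<bar> < r/4" using N1[of n] n by simp
      have a2: "\<bar>measure M {\<omega>\<in>space M. X n \<omega> \<le> x - d} - ?F (x-d)\<bar> < r/4" using N2[of n] n by simp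
      have "measure M B \<ge> 0" by simp
      then show ?thesis using u l a1 a2 Fp Fm B(3) unfolding real_norm_def abs_less_iff by linarith
    qed
    then show "\<exists>N. \<forall>n\<ge>N. norm (measure M {\<omega>\<in>space M. Y n \<omega> \<le> x} - ?F x) < r" by blast
  qed
qed

lemma real_distribution_return0: "real_distribution (return borel (0::real))"
  unfolding real_distribution_def real_distribution_axioms_def
  by (auto intro: prob_space_return)

lemma weak_conv_point0:
  assumes M: "prob_space M" and Ym: "\<And>n. Y n \<in> borel_measurable M" and ng: "negl M Y"
  shows "weak_conv_m (\<lambda>n. distr M borel (Y n)) (return borel 0)"
  unfolding weak_conv_m_def weak_conv_def
proof (intro allI impI)
  interpret prob_space M by (rule M)
  interpret R: real_distribution "return borel (0::real)" by (rule real_distribution_return0)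
  fix x :: real assume c: "isCont (cdf (return borel 0)) x"
  have x0: "x \<noteq> 0"
  proof
    assume "x = 0"
    then have "measure (return borel (0::real)) {0} = 0" using c R.isCont_cdf by simp
    then show False by (simp add: measure_return)
  qed
  have Fx: "cdf (return borel 0) x = (if 0 \<le> x then 1 else 0)"
    unfolding cdf_def2 by (simp add: measure_return)
  show "(\<lambda>n. cdf (distr M borel (Y n)) x) \<longlonglongrightarrow> cdf (return borel 0) x"
    unfolding cdf_distr_eq[OF Ym] Fx
  proof (rule LIMSEQ_I)
    fix r :: real assume r: "r > 0"
    have ax: "\<bar>x\<bar>/2 > 0" using x0 by simp
    from neglD[OF ng ax, of "r/2"] r obtain N where
      N: "\<forall>n\<ge>N. \<exists>B\<in>sets M. {\<omega>\<in>space M. \<bar>Y n \<omega>\<bar> > \<bar>x\<bar>/2} \<subseteq> B \<and> measure M B \<le> r/2" by auto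
    have "norm (measure M {\<omega>\<in>space M. Y n \<omega> \<le> x} - (if 0 \<le> x then 1 else 0)) < r" if n: "n \<ge> N" for n
    proof -
      from N n obtain B where B: "B \<in> sets M" "{\<omega>\<in>space M. \<bar>Y n \<omega>\<bar> > \<bar>x\<bar>/2} \<subseteq> B" "measure M B \<le> r/2" by auto
      have [measurable]: "Y n \<in> borel_measurable M" using Ym by auto
      have m1: "{\<omega>\<in>space M. Y n \<omega> \<le> x} \<in> sets M" by measurable
      have le1: "measure M {\<omega>\<in>space M. Y n \<omega> \<le> x} \<le> 1" by (rule prob_le_1)
      have ge0: "measure M {\<omega>\<in>space M. Y n \<omega> \<le> x} \<ge> 0" by simp
      show ?thesis
      proof (cases "0 \<le> x")
        case True
        then have "space M \<subseteq> {\<omega>\<in>space M. Y n \<omega> \<le> x} \<union> B" using B(2) x0 by force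
        then have "measure M (space M) \<le> measure M ({\<omega>\<in>space M. Y n \<omega> \<le> x} \<union> B)"
          by (rule finite_measure_mono) (use m1 B in auto)
        also have "\<dots> \<le> measure M {\<omega>\<in>space M. Y n \<omega> \<le> x} + measure M B"
          by (rule measure_Un_le) (use m1 B in auto)
        finally show ?thesis using True B(3) le1 r prob_space by simp
      next
        case False
        then have "{\<omega>\<in>space M. Y n \<omega> \<le> x} \<subseteq> B" using B(2) by force
        then have "measure M {\<omega>\<in>space M. Y n \<omega> \<le> x} \<le> measure M B"
          by (rule finite_measure_mono) (use B in auto)
        then show ?thesis using False B(3) ge0 r by simp
      qed
    qed
    then show "\<exists>N. \<forall>n\<ge>N. norm (measure M {\<omega>\<in>space M. Y n \<omega> \<le> x} - (if 0 \<le> x then 1 else 0)) < r" by blast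
  qed
qed


lemma std_cdf_cont: "isCont (cdf std_normal_distribution) x"
proof -
  interpret real_distribution std_normal_distribution by (rule real_dist_normal_dist)
  have "emeasure std_normal_distribution {x} = 0"
    by (subst emeasure_density) (auto intro!: nn_integral_null_set finite_imp_null_set_lborel)
  then have "measure std_normal_distribution {x} = 0" by (simp add: measure_def)
  then show ?thesis using isCont_cdf by simp
qed

lemma normal_cdf_scale:
  assumes s: "\<sigma> > 0"
  shows "cdf (normal_measure (\<sigma>\<^sup>2)) x = cdf std_normal_distribution (x / \<sigma>)"
proof -
  interpret S: prob_space std_normal_distribution using prob_space_normal_density by simp
  have d0: "distributed std_normal_distribution lborel (\<lambda>x. x) std_normal_density"
    unfolding distributed_def by (auto simp: distr_id2)
  have "distributed std_normal_distribution lborel (\<lambda>y. 0 + \<sigma> * y) (normal_density (0 + \<sigma> * 0) (\<bar>\<sigma>\<bar> * 1))"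
    by (rule S.normal_density_affine[OF d0]) (use s in auto)
  then have dd: "distr std_normal_distribution lborel (\<lambda>y. \<sigma> * y) = density lborel (normal_density 0 \<sigma>)"
    using s unfolding distributed_def by simp
  have nm: "normal_measure (\<sigma>\<^sup>2) = density lborel (normal_density 0 \<sigma>)"
    using s by (simp add: normal_measure_def)
  have "cdf (normal_measure (\<sigma>\<^sup>2)) x = measure (distr std_normal_distribution lborel (\<lambda>y. \<sigma> * y)) {..x}"
    unfolding nm dd cdf_def2 ..
  also have "\<dots> = measure std_normal_distribution ((\<lambda>y. \<sigma> * y) -` {..x} \<inter> space std_normal_distribution)"
    by (rule measure_distr) auto
  also have "(\<lambda>y. \<sigma> * y) -` {..x} \<inter> space std_normal_distribution = {..x/\<sigma>}"
    using s by (auto simp: pos_le_divide_eq mult.commute)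
  finally show ?thesis unfolding cdf_def2 .
qed

lemma normal_cdf_cont:
  assumes s: "\<sigma> > 0"
  shows "isCont (cdf (normal_measure (\<sigma>\<^sup>2))) x"
proof -
  have "isCont (\<lambda>x. cdf std_normal_distribution (x / \<sigma>)) x"
    by (rule continuous_at_compose[OF _ std_cdf_cont, unfolded comp_def]) (use s in simp)
  moreover have "cdf (normal_measure (\<sigma>\<^sup>2)) = (\<lambda>x. cdf std_normal_distribution (x / \<sigma>))"
    using normal_cdf_scale[OF s] by (simp add: fun_eq_iff)
  ultimately show ?thesis by simp
qed

lemma weak_conv_scale:
  assumes s: "\<sigma> > 0" and Xm: "\<And>n. X n \<in> borel_measurable M"
    and conv: "weak_conv_m (\<lambda>n. distr M borel (X n)) std_normal_distribution"
  shows "weak_conv_m (\<lambda>n. distr M borel (\<lambda>\<omega>. \<sigma> * X n \<omega>)) (normal_measure (\<sigma>\<^sup>2))"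
  unfolding weak_conv_m_def weak_conv_def
proof (intro allI impI)
  fix x :: real
  have Xm': "(\<lambda>\<omega>. \<sigma> * X n \<omega>) \<in> borel_measurable M" for n using Xm by measurable
  have eq: "{\<omega> \<in> space M. \<sigma> * X n \<omega> \<le> x} = {\<omega> \<in> space M. X n \<omega> \<le> x / \<sigma>}" for n
    using s by (auto simp: pos_le_divide_eq mult.commute)
  have "(\<lambda>n. cdf (distr M borel (X n)) (x/\<sigma>)) \<longlonglongrightarrow> cdf std_normal_distribution (x/\<sigma>)"
    using conv std_cdf_cont unfolding weak_conv_m_def weak_conv_def by blast
  then show "(\<lambda>n. cdf (distr M borel (\<lambda>\<omega>. \<sigma> * X n \<omega>)) x) \<longlonglongrightarrow> cdf (normal_measure (\<sigma>\<^sup>2)) x"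
    unfolding normal_cdf_scale[OF s] cdf_distr_eq[OF Xm'] eq cdf_distr_eq[OF Xm] .
qed


lemma det_b:
  fixes \<gamma> K \<eta> u b z g h :: real
  assumes "\<gamma> > 0" "K > 0" "\<eta> > 0" "\<eta> \<le> 1" "\<eta> \<le> \<gamma>/4"
    "\<bar>u\<bar> < K" "\<bar>b\<bar> < K" "\<bar>z\<bar> < \<eta>" "\<bar>g\<bar> < \<eta>" "\<bar>h\<bar> < \<eta>"
  shows "\<gamma> + g - h * z > \<gamma>/2"
    and "\<bar>(u - b * z) / (\<gamma> + g - h * z) - u / \<gamma>\<bar> \<le> \<eta> * (4 * K / \<gamma>\<^sup>2 + 2 * K / \<gamma>)"
proof -
  define c where "c = \<gamma> + g - h * z"
  have hz: "\<bar>h * z\<bar> \<le> \<eta>"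
  proof -
    have "\<bar>h * z\<bar> = \<bar>h\<bar> * \<bar>z\<bar>" by (simp add: abs_mult)
    also have "\<dots> \<le> 1 * \<eta>" using assms by (intro mult_mono) auto
    finally show ?thesis by simp
  qed
  have cg: "\<bar>c - \<gamma>\<bar> < 2 * \<eta>" using hz assms unfolding c_def by linarith
  then show c2: "\<gamma> + g - h * z > \<gamma>/2" using assms unfolding c_def by linarith
  have cpos: "c > 0" using c2 assms unfolding c_def by linarith
  have eq: "(u - b * z) / c - u / \<gamma> = (u * (\<gamma> - c)) / (c * \<gamma>) - (b * z) / c"
    using cpos assms(1) by (simp add: field_simps)
  have t1: "\<bar>(u * (\<gamma> - c)) / (c * \<gamma>)\<bar> \<le> \<eta> * (4 * K / \<gamma>\<^sup>2)"
  proof -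
    have n1: "\<bar>u * (\<gamma> - c)\<bar> \<le> K * (2 * \<eta>)"
      unfolding abs_mult using cg assms by (intro mult_mono) (auto simp: abs_minus_commute)
    have d1: "c * \<gamma> \<ge> \<gamma>\<^sup>2 / 2"
      using c2 assms(1) unfolding c_def power2_eq_square
      by (metis less_eq_real_def mult.commute mult_le_cancel_left_pos times_divide_eq_right)
    have "\<bar>(u * (\<gamma> - c)) / (c * \<gamma>)\<bar> = \<bar>u * (\<gamma> - c)\<bar> / (c * \<gamma>)"
      using cpos assms(1) by (simp add: abs_div)
    also have "\<dots> \<le> (K * (2 * \<eta>)) / (\<gamma>\<^sup>2 / 2)"
      by (rule frac_le) (use n1 d1 assms(1) in auto)
    also have "\<dots> = \<eta> * (4 * K / \<gamma>\<^sup>2)" by (simp add: field_simps)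
    finally show ?thesis .
  qed
  have t2: "\<bar>(b * z) / c\<bar> \<le> \<eta> * (2 * K / \<gamma>)"
  proof -
    have n1: "\<bar>b * z\<bar> \<le> K * \<eta>"
      unfolding abs_mult using assms by (intro mult_mono) auto
    have "\<bar>(b * z) / c\<bar> = \<bar>b * z\<bar> / c" using cpos by simp
    also have "\<dots> \<le> (K * \<eta>) / (\<gamma> / 2)"
      by (rule frac_le) (use n1 c2 assms(1,2,3) in \<open>auto simp: c_def\<close>)
    also have "\<dots> = \<eta> * (2 * K / \<gamma>)" by (simp add: field_simps)
    finally show ?thesis .
  qed
  show "\<bar>(u - b * z) / (\<gamma> + g - h * z) - u / \<gamma>\<bar> \<le> \<eta> * (4 * K / \<gamma>\<^sup>2 + 2 * K / \<gamma>)"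
  proof -
    have "\<bar>(u - b * z) / c - u / \<gamma>\<bar> \<le> \<bar>(u * (\<gamma> - c)) / (c * \<gamma>)\<bar> + \<bar>(b * z) / c\<bar>"
      unfolding eq by (rule abs_triangle_ineq4)
    also have "\<dots> \<le> \<eta> * (4 * K / \<gamma>\<^sup>2) + \<eta> * (2 * K / \<gamma>)" using t1 t2 by (rule add_mono)
    finally show ?thesis unfolding c_def by (simp add: distrib_left)
  qed
qed

lemma det_a:
  fixes \<gamma> \<eta> a1 a2 z c :: real
  assumes "\<gamma> > 0" "\<eta> > 0" "\<eta> \<le> 1" "c > \<gamma>/2"
    "\<bar>a1\<bar> < \<eta>" "\<bar>a2\<bar> < \<eta>" "\<bar>z\<bar> < \<eta>"
  shows "\<bar>(a1 - a2 * z) / c\<bar> \<le> \<eta> * (4 / \<gamma>)"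
proof -
  have "\<bar>a2 * z\<bar> \<le> 1 * \<eta>" unfolding abs_mult using assms by (intro mult_mono) auto
  then have n: "\<bar>a1 - a2 * z\<bar> \<le> 2 * \<eta>" using assms by linarith
  have "\<bar>(a1 - a2 * z) / c\<bar> = \<bar>a1 - a2 * z\<bar> / c" using assms by simp
  also have "\<dots> \<le> (2 * \<eta>) / (\<gamma> / 2)"
    by (rule frac_le) (use n assms in auto)
  also have "\<dots> = \<eta> * (4 / \<gamma>)" by (simp add: field_simps)
  finally show ?thesis .
qed

lemma samp_cov_center:
  assumes n: "n > 0"
  shows "samp_cov n x z = (\<Sum>i<n. (x i - a) * (z i - b)) / real n
          - ((\<Sum>i<n. x i - a) / real n) * ((\<Sum>i<n. z i - b) / real n)"
proof -
  have s1: "(\<Sum>i<n. (x i - a) * (z i - b)) = (\<Sum>i<n. x i * z i) - b * (\<Sum>i<n. x i) - a * (\<Sum>i<n. z i) + real n * a * b"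
    by (simp add: algebra_simps sum.distrib sum_subtractf sum_distrib_left)
  have s2: "(\<Sum>i<n. x i - a) = (\<Sum>i<n. x i) - real n * a" by (simp add: sum_subtractf)
  have s3: "(\<Sum>i<n. z i - b) = (\<Sum>i<n. z i) - real n * b" by (simp add: sum_subtractf)
  show ?thesis unfolding samp_cov_def s1 s2 s3 using n
    by (simp add: field_simps power2_eq_square)
qed

lemma samp_cov_lin:
  "samp_cov n x z - c * samp_cov n y z = samp_cov n (\<lambda>i. x i - c * y i) z"
  unfolding samp_cov_def
  by (simp add: sum_subtractf sum_distrib_left[symmetric] algebra_simps add_divide_distrib diff_divide_distrib)


definition cen :: "'u measure \<Rightarrow> ('u \<Rightarrow> real) \<Rightarrow> bool" where
  "cen P f \<longleftrightarrow> f \<in> borel_measurable P \<and> integrable P (\<lambda>u. (f u)\<^sup>2) \<and> (\<integral>u. f u \<partial>P) = 0"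

lemma cen_event_meas:
  assumes "cen P f"
  shows "{\<omega> \<in> space (PiM UNIV (\<lambda>_. P)). \<bar>\<Sum>i<n. f (\<omega> i)\<bar> \<ge> t} \<in> sets (PiM UNIV (\<lambda>_. P))"
proof -
  have [measurable]: "f \<in> borel_measurable P" using assms by (simp add: cen_def)
  show ?thesis by measurable
qed

lemma lln_event:
  assumes P: "prob_space P" and f: "cen P f" and eta: "\<eta> > 0" and d: "\<delta> > 0"
  shows "\<exists>N. \<forall>n\<ge>N. measure (PiM UNIV (\<lambda>_. P)) {\<omega> \<in> space (PiM UNIV (\<lambda>_. P)). \<bar>\<Sum>i<n. f (\<omega> i)\<bar> \<ge> real n * \<eta>} \<le> \<delta>"
proof -
  define s where "s = (\<integral>u. (f u)\<^sup>2 \<partial>P)"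
  have s0: "s \<ge> 0" unfolding s_def by simp
  obtain N :: nat where N: "real N > s / (\<eta>\<^sup>2 * \<delta>)" using reals_Archimedean2 by blast
  have "measure (PiM UNIV (\<lambda>_. P)) {\<omega> \<in> space (PiM UNIV (\<lambda>_. P)). \<bar>\<Sum>i<n. f (\<omega> i)\<bar> \<ge> real n * \<eta>} \<le> \<delta>"
    if n: "n \<ge> max 1 N" for n
  proof -
    have n0: "real n > 0" using n by simp
    have "measure (PiM UNIV (\<lambda>_. P)) {\<omega> \<in> space (PiM UNIV (\<lambda>_. P)). \<bar>\<Sum>i<n. f (\<omega> i)\<bar> \<ge> real n * \<eta>}
          \<le> real n * s / (real n * \<eta>)\<^sup>2"
      unfolding s_def using f n0 eta by (intro sum_cheb[OF P]) (auto simp: cen_def)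
    also have "\<dots> = s / (real n * \<eta>\<^sup>2)" using n0 by (simp add: power2_eq_square field_simps)
    also have "\<dots> \<le> \<delta>"
    proof -
      have "real n \<ge> real N" using n by simp
      then have "real n > s / (\<eta>\<^sup>2 * \<delta>)" using N by linarith
      then have "s < real n * (\<eta>\<^sup>2 * \<delta>)" using eta d by (simp add: pos_divide_less_eq)
      then show ?thesis using n0 eta by (simp add: pos_divide_le_eq mult.commute mult.left_commute)
    qed
    finally show ?thesis .
  qed
  then show ?thesis by blast
qed

lemma tight_event:
  assumes P: "prob_space P" and f: "cen P f" and K: "K > 0" and n: "n > 0"
  shows "measure (PiM UNIV (\<lambda>_. P)) {\<omega> \<in> space (PiM UNIV (\<lambda>_. P)). \<bar>\<Sum>i<n. f (\<omega> i)\<bar> \<ge> K * sqrt (real n)}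
          \<le> (\<integral>u. (f u)\<^sup>2 \<partial>P) / K\<^sup>2"
proof -
  have n0: "real n > 0" using n by simp
  have "measure (PiM UNIV (\<lambda>_. P)) {\<omega> \<in> space (PiM UNIV (\<lambda>_. P)). \<bar>\<Sum>i<n. f (\<omega> i)\<bar> \<ge> K * sqrt (real n)}
          \<le> real n * (\<integral>u. (f u)\<^sup>2 \<partial>P) / (K * sqrt (real n))\<^sup>2"
    using f n0 K by (intro sum_cheb[OF P]) (auto simp: cen_def)
  also have "\<dots> = (\<integral>u. (f u)\<^sup>2 \<partial>P) / K\<^sup>2" using n0 K by (simp add: power_mult_distrib)
  finally show ?thesis .
qed

lemma measure_Un5:
  assumes "A1 \<in> sets M" "A2 \<in> sets M" "A3 \<in> sets M" "A4 \<in> sets M" "A5 \<in> sets M"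
  shows "measure M (A1 \<union> A2 \<union> A3 \<union> A4 \<union> A5) \<le> measure M A1 + measure M A2 + measure M A3 + measure M A4 + measure M A5"
proof -
  have "measure M (A1 \<union> A2 \<union> A3 \<union> A4 \<union> A5) \<le> measure M (A1 \<union> A2 \<union> A3 \<union> A4) + measure M A5"
    by (rule measure_Un_le) (use assms in auto)
  also have "measure M (A1 \<union> A2 \<union> A3 \<union> A4) \<le> measure M (A1 \<union> A2 \<union> A3) + measure M A4"
    by (rule measure_Un_le) (use assms in auto)
  also have "measure M (A1 \<union> A2 \<union> A3) \<le> measure M (A1 \<union> A2) + measure M A3"
    by (rule measure_Un_le) (use assms in auto)
  also have "measure M (A1 \<union> A2) \<le> measure M A1 + measure M A2"
    by (rule measure_Un_le) (use assms in auto)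
  finally show ?thesis by simp
qed


lemma per_l:
  fixes f1 f2 f3 f4 f5 :: "'u \<Rightarrow> real" and CY CD :: "nat \<Rightarrow> (nat \<Rightarrow> 'u) \<Rightarrow> real"
  assumes P: "prob_space P"
    and c1: "cen P f1" and c2: "cen P f2" and c3: "cen P f3" and c4: "cen P f4" and c5: "cen P f5"
    and g: "\<gamma> > 0"
    and idY: "\<And>n \<omega>. n > 0 \<Longrightarrow> CY n \<omega> - W * CD n \<omega> =
        (\<Sum>i<n. f1 (\<omega> i)) / real n - ((\<Sum>i<n. f2 (\<omega> i)) / real n) * ((\<Sum>i<n. f3 (\<omega> i)) / real n)"
    and idD: "\<And>n \<omega>. n > 0 \<Longrightarrow> CD n \<omega> =
        \<gamma> + (\<Sum>i<n. f4 (\<omega> i)) / real n - ((\<Sum>i<n. f5 (\<omega> i)) / real n) * ((\<Sum>i<n. f3 (\<omega> i)) / real n)"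
  shows "negl (PiM UNIV (\<lambda>_. P)) (\<lambda>n \<omega>. sqrt (real n) * (CY n \<omega> / CD n \<omega> - W) - (\<Sum>i<n. f1 (\<omega> i)) / (\<gamma> * sqrt (real n)))"
    and "negl (PiM UNIV (\<lambda>_. P)) (\<lambda>n \<omega>. CY n \<omega> / CD n \<omega> - W)"
proof -
  let ?M = "PiM UNIV (\<lambda>_. P)"
  interpret M: prob_space ?M using P by (intro prob_space_PiM) auto
  define S where "S = (\<lambda>(f::'u \<Rightarrow> real) n (\<omega>::nat \<Rightarrow> 'u). \<Sum>i<n. f (\<omega> i))"
  define Ev where "Ev = (\<lambda>f t n. {\<omega> \<in> space ?M. \<bar>S f n \<omega>\<bar> \<ge> t})"
  have Evm: "cen P f \<Longrightarrow> Ev f t n \<in> sets ?M" for f t n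
    unfolding Ev_def S_def by (rule cen_event_meas)
  have lln: "cen P f \<Longrightarrow> \<eta> > 0 \<Longrightarrow> \<delta> > 0 \<Longrightarrow> \<exists>N. \<forall>n\<ge>N. measure ?M (Ev f (real n * \<eta>) n) \<le> \<delta>" for f \<eta> \<delta>
    unfolding Ev_def S_def by (rule lln_event[OF P])
  have key: "CY n \<omega> / CD n \<omega> - W = (S f1 n \<omega> / real n - (S f2 n \<omega> / real n) * (S f3 n \<omega> / real n)) / CD n \<omega>"
    and key2: "CD n \<omega> = \<gamma> + S f4 n \<omega> / real n - (S f5 n \<omega> / real n) * (S f3 n \<omega> / real n)"
    if "n > 0" "CD n \<omega> \<noteq> 0" for n \<omega>
  proof -
    show "CD n \<omega> = \<gamma> + S f4 n \<omega> / real n - (S f5 n \<omega> / real n) * (S f3 n \<omega> / real n)"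
      using idD[OF that(1)] unfolding S_def .
    have "CY n \<omega> / CD n \<omega> - W = (CY n \<omega> - W * CD n \<omega>) / CD n \<omega>" using that(2) by (simp add: field_simps)
    then show "CY n \<omega> / CD n \<omega> - W = (S f1 n \<omega> / real n - (S f2 n \<omega> / real n) * (S f3 n \<omega> / real n)) / CD n \<omega>"
      using idY[OF that(1)] unfolding S_def by simp
  qed
  show "negl ?M (\<lambda>n \<omega>. sqrt (real n) * (CY n \<omega> / CD n \<omega> - W) - (\<Sum>i<n. f1 (\<omega> i)) / (\<gamma> * sqrt (real n)))"
    unfolding negl_def
  proof (intro allI impI)
    fix e \<delta> :: real assume e: "e > 0" and d: "\<delta> > 0"
    define s1 where "s1 = (\<integral>u. (f1 u)\<^sup>2 \<partial>P)"
    define s2 where "s2 = (\<integral>u. (f2 u)\<^sup>2 \<partial>P)"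
    have s0: "s1 \<ge> 0" "s2 \<ge> 0" unfolding s1_def s2_def by simp_all
    define K where "K = sqrt (5 * (s1 + s2 + 1) / \<delta>)"
    have K0: "K > 0" unfolding K_def using s0 d by simp
    have K2: "K\<^sup>2 = 5 * (s1 + s2 + 1) / \<delta>" unfolding K_def using s0 d by simp
    have sK1: "s1 / K\<^sup>2 \<le> \<delta>/5" and sK2: "s2 / K\<^sup>2 \<le> \<delta>/5"
      unfolding K2 using s0 d by (simp_all add: field_simps)
    define C where "C = 4 * K / \<gamma>\<^sup>2 + 2 * K / \<gamma>"
    have C0: "C > 0" unfolding C_def using K0 g by (intro add_pos_pos divide_pos_pos) auto
    define \<eta> where "\<eta> = min 1 (min (\<gamma>/4) (e / C))"
    have eta4: "\<eta> \<le> \<gamma>/4" unfolding \<eta>_def by (rule order_trans[OF min.cobounded2 min.cobounded1])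
    have eta123: "\<eta> > 0" "\<eta> \<le> 1" "\<eta> \<le> \<gamma>/4"
      using eta4 unfolding \<eta>_def using g e C0 by auto
    have "\<eta> \<le> e / C" unfolding \<eta>_def by simp
    then have "\<eta> * C \<le> (e / C) * C" using C0 by (intro mult_right_mono) auto
    then have "\<eta> * C \<le> e" using C0 by simp
    note eta = eta123 this
    from lln[OF c3 eta(1), of "\<delta>/5"] d obtain N3 where N3: "\<forall>n\<ge>N3. measure ?M (Ev f3 (real n * \<eta>) n) \<le> \<delta>/5" by auto
    from lln[OF c4 eta(1), of "\<delta>/5"] d obtain N4 where N4: "\<forall>n\<ge>N4. measure ?M (Ev f4 (real n * \<eta>) n) \<le> \<delta>/5" by auto
    from lln[OF c5 eta(1), of "\<delta>/5"] d obtain N5 where N5: "\<forall>n\<ge>N5. measure ?M (Ev f5 (real n * \<eta>) n) \<le> \<delta>/5" by auto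
    have "\<exists>B\<in>sets ?M. {x \<in> space ?M. e < \<bar>sqrt (real n) * (CY n x / CD n x - W) - (\<Sum>i<n. f1 (x i)) / (\<gamma> * sqrt (real n))\<bar>} \<subseteq> B
            \<and> measure ?M B \<le> \<delta>" if n: "n \<ge> max 1 (max N3 (max N4 N5))" for n
    proof -
      have n0: "n > 0" using n by simp
      define sn where "sn = sqrt (real n)"
      have sn0: "sn > 0" unfolding sn_def using n0 by simp
      have snn: "sn * sn = real n" unfolding sn_def by simp
      define B where "B = Ev f1 (K * sn) n \<union> Ev f2 (K * sn) n \<union> Ev f3 (real n * \<eta>) n \<union> Ev f4 (real n * \<eta>) n \<union> Ev f5 (real n * \<eta>) n"
      have Bm: "B \<in> sets ?M" unfolding B_def using Evm c1 c2 c3 c4 c5 by auto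
      have m1: "measure ?M (Ev f1 (K * sn) n) \<le> \<delta>/5"
        using tight_event[OF P c1 K0 n0] sK1 unfolding Ev_def S_def s1_def sn_def by linarith
      have m2: "measure ?M (Ev f2 (K * sn) n) \<le> \<delta>/5"
        using tight_event[OF P c2 K0 n0] sK2 unfolding Ev_def S_def s2_def sn_def by linarith
      have m3: "measure ?M (Ev f3 (real n * \<eta>) n) \<le> \<delta>/5" using N3 n by simp
      have m4: "measure ?M (Ev f4 (real n * \<eta>) n) \<le> \<delta>/5" using N4 n by simp
      have m5: "measure ?M (Ev f5 (real n * \<eta>) n) \<le> \<delta>/5" using N5 n by simp
      have mB: "measure ?M B \<le> \<delta>"
        unfolding B_def using measure_Un5[OF Evm[OF c1, of "K * sn" n] Evm[OF c2, of "K * sn" n] Evm[OF c3, of "real n * \<eta>" n] Evm[OF c4, of "real n * \<eta>" n] Evm[OF c5, of "real n * \<eta>" n]]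
          m1 m2 m3 m4 m5 by linarith
      have "{x \<in> space ?M. e < \<bar>sqrt (real n) * (CY n x / CD n x - W) - (\<Sum>i<n. f1 (x i)) / (\<gamma> * sqrt (real n))\<bar>} \<subseteq> B"
      proof (rule subsetI, rule ccontr)
        fix \<omega> assume w: "\<omega> \<in> {x \<in> space ?M. e < \<bar>sqrt (real n) * (CY n x / CD n x - W) - (\<Sum>i<n. f1 (x i)) / (\<gamma> * sqrt (real n))\<bar>}"
          and nB: "\<omega> \<notin> B"
        have sp: "\<omega> \<in> space ?M" using w by simp
        have b1: "\<bar>S f1 n \<omega>\<bar> < K * sn" and b2: "\<bar>S f2 n \<omega>\<bar> < K * sn"
          and b3: "\<bar>S f3 n \<omega>\<bar> < real n * \<eta>" and b4: "\<bar>S f4 n \<omega>\<bar> < real n * \<eta>"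
          and b5: "\<bar>S f5 n \<omega>\<bar> < real n * \<eta>"
          using nB sp unfolding B_def Ev_def by auto
        define u where "u = S f1 n \<omega> / sn"
        define b where "b = S f2 n \<omega> / sn"
        define z where "z = S f3 n \<omega> / real n"
        define gg where "gg = S f4 n \<omega> / real n"
        define h where "h = S f5 n \<omega> / real n"
        have bu: "\<bar>u\<bar> < K" unfolding u_def using b1 sn0 by (simp add: abs_div pos_divide_less_eq)
        have bb: "\<bar>b\<bar> < K" unfolding b_def using b2 sn0 by (simp add: abs_div pos_divide_less_eq)
        have bz: "\<bar>z\<bar> < \<eta>" unfolding z_def using b3 n0 by (simp add: abs_div pos_divide_less_eq mult.commute)
        have bg: "\<bar>gg\<bar> < \<eta>" unfolding gg_def using b4 n0 by (simp add: abs_div pos_divide_less_eq mult.commute)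
        have bh: "\<bar>h\<bar> < \<eta>" unfolding h_def using b5 n0 by (simp add: abs_div pos_divide_less_eq mult.commute)
        have CDe: "CD n \<omega> = \<gamma> + gg - h * z"
          using idD[OF n0] unfolding gg_def h_def z_def S_def by simp
        have CDp: "CD n \<omega> > \<gamma>/2"
          using det_b(1)[OF g K0 eta(1,2,3) bu bb bz bg bh] CDe by simp
        have "sqrt (real n) * (CY n \<omega> / CD n \<omega> - W) - (\<Sum>i<n. f1 (\<omega> i)) / (\<gamma> * sqrt (real n))
              = (u - b * z) / (\<gamma> + gg - h * z) - u / \<gamma>"
        proof -
          have e1: "CY n \<omega> / CD n \<omega> - W = (S f1 n \<omega> / real n - (S f2 n \<omega> / real n) * (S f3 n \<omega> / real n)) / CD n \<omega>"
            using key[OF n0] CDp g by simp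
          have e2: "sn * (S f1 n \<omega> / real n - (S f2 n \<omega> / real n) * (S f3 n \<omega> / real n)) = u - b * z"
            unfolding u_def b_def z_def snn[symmetric] using sn0 by (simp add: field_simps)
          have e3: "(\<Sum>i<n. f1 (\<omega> i)) / (\<gamma> * sqrt (real n)) = u / \<gamma>"
            unfolding u_def S_def sn_def by simp
          have "sqrt (real n) * (CY n \<omega> / CD n \<omega> - W) = (sn * (S f1 n \<omega> / real n - (S f2 n \<omega> / real n) * (S f3 n \<omega> / real n))) / CD n \<omega>"
            unfolding e1 sn_def by simp
          then show ?thesis unfolding e2 e3 CDe by simp
        qed
        also have "\<bar>\<dots>\<bar> \<le> \<eta> * C"
          unfolding C_def by (rule det_b(2)[OF g K0 eta(1,2,3) bu bb bz bg bh])
        finally show False using w eta(4) by simp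
      qed
      then show ?thesis using Bm mB by blast
    qed
    then show "\<exists>N. \<forall>n\<ge>N. \<exists>B\<in>sets ?M. {x \<in> space ?M. e < \<bar>sqrt (real n) * (CY n x / CD n x - W) - (\<Sum>i<n. f1 (x i)) / (\<gamma> * sqrt (real n))\<bar>} \<subseteq> B
            \<and> measure ?M B \<le> \<delta>" by blast
  qed
  show "negl ?M (\<lambda>n \<omega>. CY n \<omega> / CD n \<omega> - W)"
    unfolding negl_def
  proof (intro allI impI)
    fix e \<delta> :: real assume e: "e > 0" and d: "\<delta> > 0"
    define \<eta> where "\<eta> = min 1 (min (\<gamma>/4) (e * \<gamma> / 4))"
    have eta4: "\<eta> \<le> \<gamma>/4" unfolding \<eta>_def by (rule order_trans[OF min.cobounded2 min.cobounded1])
    have eta123: "\<eta> > 0" "\<eta> \<le> 1" "\<eta> \<le> \<gamma>/4"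
      using eta4 unfolding \<eta>_def using g e by auto
    have "\<eta> \<le> e * \<gamma> / 4" unfolding \<eta>_def by simp
    then have "\<eta> * (4 / \<gamma>) \<le> (e * \<gamma> / 4) * (4 / \<gamma>)" using g by (intro mult_right_mono) auto
    then have "\<eta> * (4 / \<gamma>) \<le> e" using g by simp
    note eta = eta123 this
    from lln[OF c1 eta(1), of "\<delta>/5"] d obtain N1 where N1: "\<forall>n\<ge>N1. measure ?M (Ev f1 (real n * \<eta>) n) \<le> \<delta>/5" by auto
    from lln[OF c2 eta(1), of "\<delta>/5"] d obtain N2 where N2: "\<forall>n\<ge>N2. measure ?M (Ev f2 (real n * \<eta>) n) \<le> \<delta>/5" by auto
    from lln[OF c3 eta(1), of "\<delta>/5"] d obtain N3 where N3: "\<forall>n\<ge>N3. measure ?M (Ev f3 (real n * \<eta>) n) \<le> \<delta>/5" by auto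
    from lln[OF c4 eta(1), of "\<delta>/5"] d obtain N4 where N4: "\<forall>n\<ge>N4. measure ?M (Ev f4 (real n * \<eta>) n) \<le> \<delta>/5" by auto
    from lln[OF c5 eta(1), of "\<delta>/5"] d obtain N5 where N5: "\<forall>n\<ge>N5. measure ?M (Ev f5 (real n * \<eta>) n) \<le> \<delta>/5" by auto
    have "\<exists>B\<in>sets ?M. {x \<in> space ?M. e < \<bar>CY n x / CD n x - W\<bar>} \<subseteq> B \<and> measure ?M B \<le> \<delta>"
      if n: "n \<ge> max 1 (max N1 (max N2 (max N3 (max N4 N5))))" for n
    proof -
      have n0: "n > 0" using n by simp
      define B where "B = Ev f1 (real n * \<eta>) n \<union> Ev f2 (real n * \<eta>) n \<union> Ev f3 (real n * \<eta>) n \<union> Ev f4 (real n * \<eta>) n \<union> Ev f5 (real n * \<eta>) n"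
      have Bm: "B \<in> sets ?M" unfolding B_def using Evm c1 c2 c3 c4 c5 by auto
      have m1: "measure ?M (Ev f1 (real n * \<eta>) n) \<le> \<delta>/5" using N1 n by simp
      have m2: "measure ?M (Ev f2 (real n * \<eta>) n) \<le> \<delta>/5" using N2 n by simp
      have m3: "measure ?M (Ev f3 (real n * \<eta>) n) \<le> \<delta>/5" using N3 n by simp
      have m4: "measure ?M (Ev f4 (real n * \<eta>) n) \<le> \<delta>/5" using N4 n by simp
      have m5: "measure ?M (Ev f5 (real n * \<eta>) n) \<le> \<delta>/5" using N5 n by simp
      have mB: "measure ?M B \<le> \<delta>"
        unfolding B_def using measure_Un5[OF Evm[OF c1, of "real n * \<eta>" n] Evm[OF c2, of "real n * \<eta>" n] Evm[OF c3, of "real n * \<eta>" n] Evm[OF c4, of "real n * \<eta>" n] Evm[OF c5, of "real n * \<eta>" n]]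
          m1 m2 m3 m4 m5 by linarith
      have "{x \<in> space ?M. e < \<bar>CY n x / CD n x - W\<bar>} \<subseteq> B"
      proof (rule subsetI, rule ccontr)
        fix \<omega> assume w: "\<omega> \<in> {x \<in> space ?M. e < \<bar>CY n x / CD n x - W\<bar>}" and nB: "\<omega> \<notin> B"
        have sp: "\<omega> \<in> space ?M" using w by simp
        have b1: "\<bar>S f1 n \<omega>\<bar> < real n * \<eta>" and b2: "\<bar>S f2 n \<omega>\<bar> < real n * \<eta>"
          and b3: "\<bar>S f3 n \<omega>\<bar> < real n * \<eta>" and b4: "\<bar>S f4 n \<omega>\<bar> < real n * \<eta>"
          and b5: "\<bar>S f5 n \<omega>\<bar> < real n * \<eta>"
          using nB sp unfolding B_def Ev_def by auto
        define a1 where "a1 = S f1 n \<omega> / real n"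
        define a2 where "a2 = S f2 n \<omega> / real n"
        define z where "z = S f3 n \<omega> / real n"
        define gg where "gg = S f4 n \<omega> / real n"
        define h where "h = S f5 n \<omega> / real n"
        have ba1: "\<bar>a1\<bar> < \<eta>" unfolding a1_def using b1 n0 by (simp add: abs_div pos_divide_less_eq mult.commute)
        have ba2: "\<bar>a2\<bar> < \<eta>" unfolding a2_def using b2 n0 by (simp add: abs_div pos_divide_less_eq mult.commute)
        have bz: "\<bar>z\<bar> < \<eta>" unfolding z_def using b3 n0 by (simp add: abs_div pos_divide_less_eq mult.commute)
        have bg: "\<bar>gg\<bar> < \<eta>" unfolding gg_def using b4 n0 by (simp add: abs_div pos_divide_less_eq mult.commute)
        have bh: "\<bar>h\<bar> < \<eta>" unfolding h_def using b5 n0 by (simp add: abs_div pos_divide_less_eq mult.commute)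
        have CDe: "CD n \<omega> = \<gamma> + gg - h * z"
          using idD[OF n0] unfolding gg_def h_def z_def S_def by simp
        have one: "(1::real) > 0" by simp
        have z0: "\<bar>0::real\<bar> < 1" by simp
        have CDp: "CD n \<omega> > \<gamma>/2"
          using det_b(1)[OF g one eta(1,2,3) z0 z0 bz bg bh] CDe by simp
        have "CY n \<omega> / CD n \<omega> - W = (a1 - a2 * z) / CD n \<omega>"
          using key[OF n0] CDp g unfolding a1_def a2_def z_def by simp
        also have "\<bar>\<dots>\<bar> \<le> \<eta> * (4 / \<gamma>)"
          by (rule det_a[OF g eta(1,2) CDp ba1 ba2 bz])
        finally show False using w eta(4) by simp
      qed
      then show ?thesis using Bm mB by blast
    qed
    then show "\<exists>N. \<forall>n\<ge>N. \<exists>B\<in>sets ?M. {x \<in> space ?M. e < \<bar>CY n x / CD n x - W\<bar>} \<subseteq> B \<and> measure ?M B \<le> \<delta>"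
      by blast
  qed
qed


definition sqi :: "'u measure \<Rightarrow> ('u \<Rightarrow> real) \<Rightarrow> bool" where
  "sqi P f \<longleftrightarrow> f \<in> borel_measurable P \<and> integrable P (\<lambda>u. (f u)\<^sup>2)"

lemma sqi_add:
  assumes "sqi P f" "sqi P g" shows "sqi P (\<lambda>u. f u + g u)"
proof -
  have [measurable]: "f \<in> borel_measurable P" "g \<in> borel_measurable P" using assms by (auto simp: sqi_def)
  have bi: "integrable P (\<lambda>u. 2 * (f u)\<^sup>2 + 2 * (g u)\<^sup>2)" using assms unfolding sqi_def by auto
  have pt: "norm ((f u + g u)\<^sup>2) \<le> norm (2 * (f u)\<^sup>2 + 2 * (g u)\<^sup>2)" for u
  proof -
    have "(f u + g u)\<^sup>2 + (f u - g u)\<^sup>2 = 2 * (f u)\<^sup>2 + 2 * (g u)\<^sup>2"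
      by (simp add: power2_sum power2_diff)
    moreover have "(f u - g u)\<^sup>2 \<ge> 0" by simp
    moreover have "(f u + g u)\<^sup>2 \<ge> 0" by simp
    ultimately show ?thesis unfolding real_norm_def by linarith
  qed
  have "integrable P (\<lambda>u. (f u + g u)\<^sup>2)"
    by (rule Bochner_Integration.integrable_bound[OF bi]) (measurable, rule AE_I2, rule pt)
  then show ?thesis by (simp add: sqi_def)
qed

lemma sqi_cmult:
  assumes "sqi P f" shows "sqi P (\<lambda>u. c * f u)"
proof -
  have [measurable]: "f \<in> borel_measurable P" using assms unfolding sqi_def by auto
  have "integrable P (\<lambda>u. c\<^sup>2 * (f u)\<^sup>2)" using assms unfolding sqi_def by auto
  moreover have "(\<lambda>u. c * f u) \<in> borel_measurable P" by measurable
  ultimately show ?thesis unfolding sqi_def by (simp add: power_mult_distrib)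
qed

lemma sqi_const:
  assumes "prob_space P" shows "sqi P (\<lambda>u. c)"
proof -
  interpret prob_space P by fact
  show ?thesis unfolding sqi_def by simp
qed

lemma sqi_diff:
  assumes "sqi P f" "sqi P g" shows "sqi P (\<lambda>u. f u - g u)"
  using sqi_add[OF assms(1) sqi_cmult[OF assms(2), of "-1"]] by simp

lemma sqi_mult_bounded:
  assumes f: "sqi P f" and h: "h \<in> borel_measurable P" and B: "\<And>u. u \<in> space P \<Longrightarrow> \<bar>h u\<bar> \<le> B"
  shows "sqi P (\<lambda>u. f u * h u)"
proof -
  have [measurable]: "f \<in> borel_measurable P" "h \<in> borel_measurable P" using assms unfolding sqi_def by auto
  have bi: "integrable P (\<lambda>u. B\<^sup>2 * (f u)\<^sup>2)" using f unfolding sqi_def by auto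
  have pt: "norm ((f u * h u)\<^sup>2) \<le> norm (B\<^sup>2 * (f u)\<^sup>2)" if "u \<in> space P" for u
  proof -
    have "\<bar>h u\<bar> * \<bar>h u\<bar> \<le> B * B" using B[OF that] by (intro mult_mono) auto
    then have "(h u)\<^sup>2 \<le> B\<^sup>2" by (simp add: power2_eq_square abs_mult_self_eq)
    then have "(h u)\<^sup>2 * (f u)\<^sup>2 \<le> B\<^sup>2 * (f u)\<^sup>2" by (rule mult_right_mono) simp
    then show ?thesis by (simp add: power_mult_distrib mult.commute)
  qed
  have "integrable P (\<lambda>u. (f u * h u)\<^sup>2)"
    by (rule Bochner_Integration.integrable_bound[OF bi]) (measurable, rule AE_I2, rule pt)
  then show ?thesis unfolding sqi_def by simp
qed

lemma sqi_bounded: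
  assumes P: "prob_space P" and h: "h \<in> borel_measurable P" and B: "\<And>u. u \<in> space P \<Longrightarrow> \<bar>h u\<bar> \<le> B"
  shows "sqi P h"
  using sqi_mult_bounded[OF sqi_const[OF P, of 1] h B] by simp

lemma sqi_int:
  assumes P: "prob_space P" and f: "sqi P f" shows "integrable P f"
proof -
  interpret prob_space P by fact
  show ?thesis using f square_integrable_imp_integrable unfolding sqi_def by auto
qed

lemma sqi_prod_int:
  assumes f: "sqi P f" and g: "sqi P g" shows "integrable P (\<lambda>u. f u * g u)"
proof -
  have [measurable]: "f \<in> borel_measurable P" "g \<in> borel_measurable P" using assms unfolding sqi_def by auto
  have bi: "integrable P (\<lambda>u. (f u)\<^sup>2 + (g u)\<^sup>2)" using assms unfolding sqi_def by auto
  have pt: "norm (f u * g u) \<le> norm ((f u)\<^sup>2 + (g u)\<^sup>2)" for u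
  proof -
    have "(\<bar>f u\<bar> - \<bar>g u\<bar>)\<^sup>2 = (f u)\<^sup>2 + (g u)\<^sup>2 - 2 * (\<bar>f u\<bar> * \<bar>g u\<bar>)"
      by (simp add: power2_diff)
    moreover have "(\<bar>f u\<bar> - \<bar>g u\<bar>)\<^sup>2 \<ge> 0" by simp
    moreover have "\<bar>f u\<bar> * \<bar>g u\<bar> \<ge> 0" by simp
    moreover have "(f u)\<^sup>2 + (g u)\<^sup>2 \<ge> 0" by simp
    ultimately show ?thesis unfolding real_norm_def abs_mult by linarith
  qed
  show ?thesis
    by (rule Bochner_Integration.integrable_bound[OF bi]) (measurable, rule AE_I2, rule pt)
qed

lemma sqi_cen:
  assumes f: "sqi P f" and m: "(\<integral>u. f u \<partial>P) = 0"
  shows "cen P f"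
  using assms unfolding sqi_def cen_def by simp

lemma meas_model:
  fixes y0 y1 :: "'u \<Rightarrow> real"
  assumes A1: "(\<lambda>u. (y0 u, y1 u, restrict (dt u) (Pow {..<L})))
               \<in> measurable P (borel \<Otimes>\<^sub>M borel \<Otimes>\<^sub>M count_space UNIV)"
    and zzm: "zz \<in> measurable P (count_space UNIV)"
    and zz_range: "\<forall>u \<in> space P. zz u \<subseteq> {..<L}"
  shows "Zl zz l \<in> borel_measurable P" and "obsD dt zz \<in> borel_measurable P"
    and "obsY y0 y1 dt zz \<in> borel_measurable P"
proof -
  have y0m: "y0 \<in> borel_measurable P"
    using measurable_compose[OF A1 measurable_fst] by simp
  have y1m: "y1 \<in> borel_measurable P"
    using measurable_compose[OF measurable_compose[OF A1 measurable_snd] measurable_fst] by simp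
  have Gm: "(\<lambda>u. restrict (dt u) (Pow {..<L})) \<in> measurable P (count_space UNIV)"
    using measurable_compose[OF measurable_compose[OF A1 measurable_snd] measurable_snd] by simp
  have "(\<lambda>S. if l \<in> S then 1 else (0::real)) \<in> measurable (count_space UNIV) borel" by simp
  from measurable_compose[OF zzm this]
  show Zm: "Zl zz l \<in> borel_measurable P" unfolding Zl_def[abs_def] .
  define A where "A = {u \<in> space P. dt u (zz u)}"
  define G where "G = (\<lambda>u. restrict (dt u) (Pow {..<L}))"
  have "A = (\<Union>S\<in>Pow {..<L}. (zz -` {S} \<inter> space P) \<inter> (G -` {f. f S} \<inter> space P))"
  proof (intro equalityI subsetI)
    fix u assume "u \<in> A"
    then have u: "u \<in> space P" "dt u (zz u)" unfolding A_def by auto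
    have zu: "zz u \<in> Pow {..<L}" using zz_range u(1) by auto
    have "u \<in> (zz -` {zz u} \<inter> space P) \<inter> (G -` {f. f (zz u)} \<inter> space P)"
      using u zu unfolding G_def by simp
    then show "u \<in> (\<Union>S\<in>Pow {..<L}. (zz -` {S} \<inter> space P) \<inter> (G -` {f. f S} \<inter> space P))"
      using zu by blast
  next
    fix u assume "u \<in> (\<Union>S\<in>Pow {..<L}. (zz -` {S} \<inter> space P) \<inter> (G -` {f. f S} \<inter> space P))"
    then obtain S where S: "S \<in> Pow {..<L}" "zz u = S" "u \<in> space P" "G u S" by auto
    then show "u \<in> A" unfolding A_def G_def by simp
  qed
  moreover have "(zz -` {S} \<inter> space P) \<inter> (G -` {f. f S} \<inter> space P) \<in> sets P" for S
    by (rule sets.Int[OF measurable_sets[OF zzm] measurable_sets[OF Gm[folded G_def]]]) auto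
  ultimately have Am: "A \<in> sets P" by auto
  have "obsD dt zz \<in> borel_measurable P \<longleftrightarrow> (indicator A :: _ \<Rightarrow> real) \<in> borel_measurable P"
    by (rule measurable_cong) (simp add: obsD_def A_def indicator_def)
  then show Dm: "obsD dt zz \<in> borel_measurable P" using Am by simp
  have [measurable]: "obsD dt zz \<in> borel_measurable P" "y0 \<in> borel_measurable P" "y1 \<in> borel_measurable P"
    using Dm y0m y1m by auto
  show "obsY y0 y1 dt zz \<in> borel_measurable P"
    unfolding obsY_def[abs_def] by measurable
qed

context
  fixes P :: "'u measure" and y0 y1 :: "'u \<Rightarrow> real" and dt :: "'u \<Rightarrow> nat set \<Rightarrow> bool"
    and zz :: "'u \<Rightarrow> nat set"
  assumes P: "prob_space P"
    and Zm: "\<And>l. Zl zz l \<in> borel_measurable P"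
    and Dm: "obsD dt zz \<in> borel_measurable P"
    and Ym: "obsY y0 y1 dt zz \<in> borel_measurable P"
    and Y2: "integrable P (\<lambda>u. (obsY y0 y1 dt zz u)\<^sup>2)"
begin

lemma sqiY: "sqi P (obsY y0 y1 dt zz)"
  using Ym Y2 unfolding sqi_def by simp

lemma sqiD: "sqi P (obsD dt zz)"
  by (rule sqi_bounded[OF P Dm, of 1]) (simp add: obsD_def)

lemma sqiZ: "sqi P (Zl zz l)"
  by (rule sqi_bounded[OF P Zm, where B=1]) (simp add: Zl_def)

lemma Aset: "{u \<in> space P. l \<in> zz u} \<in> sets P"
proof -
  have "{u \<in> space P. l \<in> zz u} = Zl zz l -` {1} \<inter> space P" by (auto simp: Zl_def split: if_splits)
  then show ?thesis using measurable_sets[OF Zm, of "{1}"] by simp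
qed

lemma Zl_ind: "u \<in> space P \<Longrightarrow> Zl zz l u = indicator {u \<in> space P. l \<in> zz u} u"
  by (simp add: Zl_def indicator_def)

lemma intZ: "(\<integral>u. Zl zz l u \<partial>P) = p_inst P zz l"
proof -
  have "(\<integral>u. Zl zz l u \<partial>P) = (\<integral>u. indicator {u \<in> space P. l \<in> zz u} u \<partial>P)"
    by (rule Bochner_Integration.integral_cong) (simp_all add: Zl_ind)
  also have "\<dots> = measure P {u \<in> space P. l \<in> zz u}" by (simp add: Int_absorb2 Collect_conj_eq)
  finally show ?thesis unfolding p_inst_def .
qed

lemma cov_center:
  assumes f: "sqi P f" and g: "sqi P g"
  shows "(\<integral>u. (f u - (\<integral>v. f v \<partial>P)) * (g u - (\<integral>v. g v \<partial>P)) \<partial>P) = cov P f g"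
proof -
  interpret prob_space P by (rule P)
  define a where "a = (\<integral>v. f v \<partial>P)"
  define b where "b = (\<integral>v. g v \<partial>P)"
  have fi: "integrable P f" and gi: "integrable P g" using sqi_int[OF P] f g by auto
  have fgi: "integrable P (\<lambda>u. f u * g u)" by (rule sqi_prod_int[OF f g])
  have "(\<lambda>u. (f u - a) * (g u - b)) = (\<lambda>u. (f u * g u - b * f u) - (a * g u - a * b))"
    by (auto simp: fun_eq_iff algebra_simps)
  then have "(\<integral>u. (f u - a) * (g u - b) \<partial>P) = (\<integral>u. f u * g u \<partial>P) - b * a - (a * b - a * b)"
    using fi gi fgi by (simp add: a_def[symmetric] b_def[symmetric] prob_space)
  then show ?thesis unfolding cov_def a_def b_def by simp
qed

lemma mean_diff_cov:
  assumes p0: "p_inst P zz l > 0" and p1: "p_inst P zz l < 1" and f: "sqi P f"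
  shows "mean_diff P zz f l = cov P f (Zl zz l) / (p_inst P zz l * (1 - p_inst P zz l))"
proof -
  interpret prob_space P by (rule P)
  define p where "p = p_inst P zz l"
  define A where "A = {u \<in> space P. l \<in> zz u}"
  have Am: "A \<in> sets P" unfolding A_def by (rule Aset)
  have Ac: "{u \<in> space P. l \<notin> zz u} = space P - A" unfolding A_def by auto
  have mA: "measure P A = p" unfolding p_def p_inst_def A_def ..
  have mAc: "measure P (space P - A) = 1 - p" using prob_compl[OF Am] mA by simp
  have fi: "integrable P f" using sqi_int[OF P f] .
  have zfi: "integrable P (\<lambda>u. Zl zz l u * f u)" by (rule sqi_prod_int[OF sqiZ f])
  have i1: "(\<integral>u. indicator A u * f u \<partial>P) = (\<integral>u. Zl zz l u * f u \<partial>P)"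
    by (rule Bochner_Integration.integral_cong) (simp_all add: Zl_ind A_def)
  have "(\<integral>u. indicator (space P - A) u * f u \<partial>P) = (\<integral>u. f u - Zl zz l u * f u \<partial>P)"
    by (rule Bochner_Integration.integral_cong) (auto simp: Zl_def A_def indicator_def)
  also have "\<dots> = (\<integral>u. f u \<partial>P) - (\<integral>u. Zl zz l u * f u \<partial>P)" using fi zfi by simp
  finally have i2: "(\<integral>u. indicator (space P - A) u * f u \<partial>P) = (\<integral>u. f u \<partial>P) - (\<integral>u. Zl zz l u * f u \<partial>P)" .
  have cv: "cov P f (Zl zz l) = (\<integral>u. Zl zz l u * f u \<partial>P) - (\<integral>u. f u \<partial>P) * p"
    unfolding cov_def p_def intZ[symmetric] by (simp add: mult.commute)
  have p0': "p > 0" "1 - p > 0" using p0 p1 p_def by auto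
  have "mean_diff P zz f l = (\<integral>u. Zl zz l u * f u \<partial>P) / p - ((\<integral>u. f u \<partial>P) - (\<integral>u. Zl zz l u * f u \<partial>P)) / (1 - p)"
    unfolding mean_diff_def cond_mean_def A_def[symmetric] Ac i1 i2 mA mAc ..
  also have "\<dots> = cov P f (Zl zz l) / (p * (1 - p))"
    unfolding cv using p0' by (simp add: field_simps)
  finally show ?thesis unfolding p_def .
qed

lemma p_lt1:
  assumes A3_Sigma: "\<forall>a :: nat \<Rightarrow> real. (\<exists>l<L. a l \<noteq> 0) \<longrightarrow>
                     (\<Sum>l<L. \<Sum>k<L. a l * a k * cov P (Zl zz l) (Zl zz k)) > 0"
    and l: "l < L" and p0: "p_inst P zz l > 0"
  shows "p_inst P zz l < 1"
proof -
  define a where "a = (\<lambda>k::nat. if k = l then (1::real) else 0)"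
  have ex: "\<exists>l'<L. a l' \<noteq> 0" using l unfolding a_def by auto
  have "(\<Sum>l<L. \<Sum>k<L. a l * a k * cov P (Zl zz l) (Zl zz k)) > 0"
    using A3_Sigma ex by blast
  moreover have "(\<Sum>l'<L. \<Sum>k<L. a l' * a k * cov P (Zl zz l') (Zl zz k)) = cov P (Zl zz l) (Zl zz l)"
  proof -
    have e: "a l' * a k * cov P (Zl zz l') (Zl zz k) = (if l' = l then (if k = l then cov P (Zl zz l) (Zl zz l) else 0) else 0)" for l' k
      unfolding a_def by simp
    have inner: "(\<Sum>k<L. if l' = l then if k = l then cov P (Zl zz l) (Zl zz l) else 0 else 0)
        = (if l' = l then cov P (Zl zz l) (Zl zz l) else 0)" for l'
      using l by (cases "l' = l") simp_all
    show ?thesis unfolding e inner using l by simp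
  qed
  moreover have "cov P (Zl zz l) (Zl zz l) = p_inst P zz l - (p_inst P zz l)\<^sup>2"
  proof -
    have "(\<lambda>u. Zl zz l u * Zl zz l u) = Zl zz l" by (auto simp: fun_eq_iff Zl_def)
    then show ?thesis unfolding cov_def by (simp add: intZ power2_eq_square)
  qed
  ultimately have "p_inst P zz l - (p_inst P zz l)\<^sup>2 > 0" by simp
  then show ?thesis
  proof (rule contrapos_pp)
    assume "\<not> p_inst P zz l < 1"
    then have "p_inst P zz l * 1 \<le> p_inst P zz l * p_inst P zz l" using p0 by (intro mult_left_mono) auto
    then show "\<not> p_inst P zz l - (p_inst P zz l)\<^sup>2 > 0" by (simp add: power2_eq_square)
  qed
qed

end

definition epsf :: "'u measure \<Rightarrow> ('u \<Rightarrow> real) \<Rightarrow> ('u \<Rightarrow> real) \<Rightarrow> ('u \<Rightarrow> nat set \<Rightarrow> bool)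
    \<Rightarrow> ('u \<Rightarrow> nat set) \<Rightarrow> nat \<Rightarrow> 'u \<Rightarrow> real" where
  "epsf P y0 y1 dt zz l u = obsY y0 y1 dt zz u - wald P y0 y1 dt zz l * obsD dt zz u
     - ((\<integral>v. obsY y0 y1 dt zz v \<partial>P) - wald P y0 y1 dt zz l * (\<integral>v. obsD dt zz v \<partial>P))"

definition infl :: "'u measure \<Rightarrow> ('u \<Rightarrow> real) \<Rightarrow> ('u \<Rightarrow> real) \<Rightarrow> ('u \<Rightarrow> nat set \<Rightarrow> bool)
    \<Rightarrow> ('u \<Rightarrow> nat set) \<Rightarrow> nat \<Rightarrow> 'u \<Rightarrow> real" where
  "infl P y0 y1 dt zz l u = epsf P y0 y1 dt zz l u * (Zl zz l u - p_inst P zz l)"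

lemma sqi_sum:
  assumes "finite I" "\<And>i. i \<in> I \<Longrightarrow> sqi P (f i)" "prob_space P"
  shows "sqi P (\<lambda>u. \<Sum>i\<in>I. f i u)"
  using assms
proof (induction I rule: finite_induct)
  case empty then show ?case using sqi_const[of P 0] by simp
next
  case (insert x F)
  then show ?case using sqi_add[of P "f x" "\<lambda>u. \<Sum>i\<in>F. f i u"] by simp
qed

lemma coord_indep_vars:
  assumes P: "prob_space P"
  shows "prob_space.indep_vars (PiM UNIV (\<lambda>_. P)) (\<lambda>_. P) (\<lambda>i \<omega>. \<omega> i) UNIV"
proof -
  interpret M: prob_space "PiM UNIV (\<lambda>_. P)"
    using P by (intro prob_space_PiM) auto
  have rv: "\<And>i. M.random_variable P (\<lambda>\<omega>. \<omega> i)"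
    using measurable_component_singleton[of _ UNIV "\<lambda>_. P"] by simp
  have e1: "(\<lambda>x. \<lambda>i\<in>UNIV. x i) = (\<lambda>x. x)" by (simp add: fun_eq_iff)
  have e2: "PiM UNIV (\<lambda>i. distr (PiM UNIV (\<lambda>_. P)) P (\<lambda>\<omega>. \<omega> i)) = PiM UNIV (\<lambda>_. P)"
    by (rule PiM_cong) (simp_all add: coord_distr[OF P])
  have "distr (PiM UNIV (\<lambda>_. P)) (PiM UNIV (\<lambda>_. P)) (\<lambda>x. \<lambda>i\<in>UNIV. x i)
        = PiM UNIV (\<lambda>i. distr (PiM UNIV (\<lambda>_. P)) P (\<lambda>\<omega>. \<omega> i))"
    unfolding e1 e2 by (rule distr_id2) simp
  then show ?thesis
    by (subst M.indep_vars_iff_distr_eq_PiM[OF _ rv]) simp_all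
qed

context
  fixes P :: "'u measure" and y0 y1 :: "'u \<Rightarrow> real" and dt :: "'u \<Rightarrow> nat set \<Rightarrow> bool"
    and zz :: "'u \<Rightarrow> nat set"
  assumes P: "prob_space P"
    and Zm: "\<And>l. Zl zz l \<in> borel_measurable P"
    and Dm: "obsD dt zz \<in> borel_measurable P"
    and Ym: "obsY y0 y1 dt zz \<in> borel_measurable P"
    and Y2: "integrable P (\<lambda>u. (obsY y0 y1 dt zz u)\<^sup>2)"
begin

lemma sqi_epsf: "sqi P (epsf P y0 y1 dt zz l)"
  unfolding epsf_def[abs_def]
  by (intro sqi_diff sqi_const[OF P] sqi_cmult sqiY[OF P Zm Dm Ym Y2] sqiD[OF P Zm Dm Ym Y2])

lemma sqi_infl: "sqi P (infl P y0 y1 dt zz l)"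
proof -
  have [measurable]: "Zl zz l \<in> borel_measurable P" by (rule Zm)
  show ?thesis unfolding infl_def[abs_def]
  proof (rule sqi_mult_bounded[OF sqi_epsf, where B=1])
    show "(\<lambda>u. Zl zz l u - p_inst P zz l) \<in> borel_measurable P" by measurable
    have "0 \<le> p_inst P zz l" "p_inst P zz l \<le> 1" unfolding p_inst_def using prob_space.prob_le_1[OF P] by auto
    then show "\<And>u. u \<in> space P \<Longrightarrow> \<bar>Zl zz l u - p_inst P zz l\<bar> \<le> 1" by (auto simp: Zl_def)
  qed
qed

lemma per_l_model:
  assumes p0: "p_inst P zz l > 0" and p1: "p_inst P zz l < 1" and pi: "mean_diff P zz (obsD dt zz) l > 0"
  shows "cov P (obsD dt zz) (Zl zz l) > 0"
    and "(\<integral>u. infl P y0 y1 dt zz l u \<partial>P) = 0"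
    and "negl (PiM UNIV (\<lambda>_. P)) (\<lambda>n \<omega>. sqrt (real n) *
           (samp_cov n (\<lambda>i. obsY y0 y1 dt zz (\<omega> i)) (\<lambda>i. Zl zz l (\<omega> i))
            / samp_cov n (\<lambda>i. obsD dt zz (\<omega> i)) (\<lambda>i. Zl zz l (\<omega> i)) - wald P y0 y1 dt zz l)
           - (\<Sum>i<n. infl P y0 y1 dt zz l (\<omega> i)) / (cov P (obsD dt zz) (Zl zz l) * sqrt (real n)))"
    and "negl (PiM UNIV (\<lambda>_. P)) (\<lambda>n \<omega>.
           samp_cov n (\<lambda>i. obsY y0 y1 dt zz (\<omega> i)) (\<lambda>i. Zl zz l (\<omega> i))
            / samp_cov n (\<lambda>i. obsD dt zz (\<omega> i)) (\<lambda>i. Zl zz l (\<omega> i)) - wald P y0 y1 dt zz l)"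
proof -
  interpret prob_space P by (rule P)
  define Y where "Y = obsY y0 y1 dt zz"
  define D where "D = obsD dt zz"
  define Z where "Z = Zl zz l"
  define p where "p = p_inst P zz l"
  define W where "W = wald P y0 y1 dt zz l"
  define EY where "EY = (\<integral>v. Y v \<partial>P)"
  define ED where "ED = (\<integral>v. D v \<partial>P)"
  define \<gamma> where "\<gamma> = cov P D Z"
  have sY: "sqi P Y" unfolding Y_def by (rule sqiY[OF P Zm Dm Ym Y2])
  have sD: "sqi P D" unfolding D_def by (rule sqiD[OF P Zm Dm Ym Y2])
  have sZ: "sqi P Z" unfolding Z_def by (rule sqiZ[OF P Zm Dm Ym Y2])
  have iY: "integrable P Y" using sqi_int[OF P sY] .
  have iD: "integrable P D" using sqi_int[OF P sD] .
  have iZ: "integrable P Z" using sqi_int[OF P sZ] .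
  have EZ: "(\<integral>v. Z v \<partial>P) = p" unfolding Z_def p_def by (rule intZ[OF P Zm Dm Ym Y2])
  have pp: "p * (1 - p) > 0" using p0 p1 unfolding p_def by simp
  have mdD: "mean_diff P zz D l = \<gamma> / (p * (1 - p))"
    unfolding \<gamma>_def p_def Z_def by (rule mean_diff_cov[OF P Zm Dm Ym Y2 p0 p1 sD])
  have mdY: "mean_diff P zz Y l = cov P Y Z / (p * (1 - p))"
    unfolding p_def Z_def by (rule mean_diff_cov[OF P Zm Dm Ym Y2 p0 p1 sY])
  have g0: "\<gamma> > 0"
  proof -
    have "\<gamma> / (p * (1 - p)) > 0" using pi mdD unfolding D_def by simp
    then show ?thesis using pp by (simp add: zero_less_divide_iff)
  qed
  then show "cov P (obsD dt zz) (Zl zz l) > 0" unfolding \<gamma>_def D_def Z_def .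
  have Wd: "W = cov P Y Z / \<gamma>"
  proof -
    have gen: "c / q / (g / q) = c / g" if "q \<noteq> 0" for c q g :: real
      using that by (cases "g = 0") (simp_all add: field_simps)
    show ?thesis unfolding W_def wald_def Y_def[symmetric] D_def[symmetric] mdD mdY
      by (rule gen) (use pp in linarith)
  qed
  have cYZ: "(\<integral>u. (Y u - EY) * (Z u - p) \<partial>P) = cov P Y Z"
    unfolding EY_def EZ[symmetric] by (rule cov_center[OF P Zm Dm Ym Y2 sY sZ])
  have cDZ: "(\<integral>u. (D u - ED) * (Z u - p) \<partial>P) = \<gamma>"
    unfolding ED_def EZ[symmetric] \<gamma>_def by (rule cov_center[OF P Zm Dm Ym Y2 sD sZ])
  have sYc: "sqi P (\<lambda>u. Y u - EY)" by (intro sqi_diff sY sqi_const[OF P])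
  have sDc: "sqi P (\<lambda>u. D u - ED)" by (intro sqi_diff sD sqi_const[OF P])
  have sZc: "sqi P (\<lambda>u. Z u - p)" by (intro sqi_diff sZ sqi_const[OF P])
  have eps_eq: "epsf P y0 y1 dt zz l u = (Y u - EY) - W * (D u - ED)" for u
    unfolding epsf_def Y_def D_def W_def EY_def ED_def by (simp add: algebra_simps)
  have infl_eq: "infl P y0 y1 dt zz l u = (Y u - EY) * (Z u - p) - W * ((D u - ED) * (Z u - p))" for u
    unfolding infl_def eps_eq Z_def[symmetric] p_def[symmetric] by (simp add: algebra_simps)
  have "(\<integral>u. infl P y0 y1 dt zz l u \<partial>P) = (\<integral>u. (Y u - EY) * (Z u - p) - W * ((D u - ED) * (Z u - p)) \<partial>P)"
    unfolding infl_eq ..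
  also have "\<dots> = cov P Y Z - W * \<gamma>"
    using sqi_prod_int[OF sYc sZc] sqi_prod_int[OF sDc sZc] cYZ cDZ by simp
  also have "\<dots> = 0" unfolding Wd using g0 by simp
  finally show i0: "(\<integral>u. infl P y0 y1 dt zz l u \<partial>P) = 0" .
  have c1: "cen P (infl P y0 y1 dt zz l)" by (rule sqi_cen[OF sqi_infl i0])
  have c2: "cen P (epsf P y0 y1 dt zz l)"
  proof (rule sqi_cen[OF sqi_epsf])
    show "(\<integral>u. epsf P y0 y1 dt zz l u \<partial>P) = 0" unfolding eps_eq using iY iD
      by (simp add: EY_def ED_def prob_space)
  qed
  have c3: "cen P (\<lambda>u. Z u - p)"
    by (rule sqi_cen[OF sZc]) (use iZ EZ in \<open>simp add: prob_space\<close>)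
  have c4: "cen P (\<lambda>u. (D u - ED) * (Z u - p) - \<gamma>)"
  proof (rule sqi_cen)
    show "sqi P (\<lambda>u. (D u - ED) * (Z u - p) - \<gamma>)"
    proof (intro sqi_diff sqi_const[OF P])
      have [measurable]: "Z \<in> borel_measurable P" unfolding Z_def by (rule Zm)
      have "0 \<le> p" "p \<le> 1" unfolding p_def p_inst_def using prob_le_1 by auto
      then show "sqi P (\<lambda>u. (D u - ED) * (Z u - p))"
        by (intro sqi_mult_bounded[OF sDc, where B=1]) (measurable, auto simp: Z_def Zl_def)
    qed
    show "(\<integral>u. (D u - ED) * (Z u - p) - \<gamma> \<partial>P) = 0"
      using sqi_prod_int[OF sDc sZc] cDZ by (simp add: prob_space)
  qed
  have c5: "cen P (\<lambda>u. D u - ED)"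
    by (rule sqi_cen[OF sDc]) (use iD in \<open>simp add: ED_def prob_space\<close>)
  have idY: "samp_cov n (\<lambda>i. Y (\<omega> i)) (\<lambda>i. Z (\<omega> i)) - W * samp_cov n (\<lambda>i. D (\<omega> i)) (\<lambda>i. Z (\<omega> i)) =
        (\<Sum>i<n. infl P y0 y1 dt zz l (\<omega> i)) / real n
        - ((\<Sum>i<n. epsf P y0 y1 dt zz l (\<omega> i)) / real n) * ((\<Sum>i<n. Z (\<omega> i) - p) / real n)"
    if n: "n > 0" for n \<omega>
  proof -
    have "samp_cov n (\<lambda>i. Y (\<omega> i)) (\<lambda>i. Z (\<omega> i)) - W * samp_cov n (\<lambda>i. D (\<omega> i)) (\<lambda>i. Z (\<omega> i))
        = samp_cov n (\<lambda>i. Y (\<omega> i) - W * D (\<omega> i)) (\<lambda>i. Z (\<omega> i))" by (rule samp_cov_lin)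
    also have "\<dots> = (\<Sum>i<n. (Y (\<omega> i) - W * D (\<omega> i) - (EY - W * ED)) * (Z (\<omega> i) - p)) / real n
        - ((\<Sum>i<n. Y (\<omega> i) - W * D (\<omega> i) - (EY - W * ED)) / real n) * ((\<Sum>i<n. Z (\<omega> i) - p) / real n)"
      by (rule samp_cov_center[OF n])
    also have "(\<lambda>i. (Y (\<omega> i) - W * D (\<omega> i) - (EY - W * ED)) * (Z (\<omega> i) - p)) = (\<lambda>i. infl P y0 y1 dt zz l (\<omega> i))"
      by (simp add: fun_eq_iff infl_def epsf_def Y_def D_def W_def EY_def ED_def Z_def p_def)
    also have "(\<lambda>i. Y (\<omega> i) - W * D (\<omega> i) - (EY - W * ED)) = (\<lambda>i. epsf P y0 y1 dt zz l (\<omega> i))"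
      by (simp add: fun_eq_iff epsf_def Y_def D_def W_def EY_def ED_def)
    finally show ?thesis .
  qed
  have idD: "samp_cov n (\<lambda>i. D (\<omega> i)) (\<lambda>i. Z (\<omega> i)) =
        \<gamma> + (\<Sum>i<n. (D (\<omega> i) - ED) * (Z (\<omega> i) - p) - \<gamma>) / real n
        - ((\<Sum>i<n. D (\<omega> i) - ED) / real n) * ((\<Sum>i<n. Z (\<omega> i) - p) / real n)"
    if n: "n > 0" for n \<omega>
  proof -
    have "samp_cov n (\<lambda>i. D (\<omega> i)) (\<lambda>i. Z (\<omega> i)) = (\<Sum>i<n. (D (\<omega> i) - ED) * (Z (\<omega> i) - p)) / real n
        - ((\<Sum>i<n. D (\<omega> i) - ED) / real n) * ((\<Sum>i<n. Z (\<omega> i) - p) / real n)"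
      by (rule samp_cov_center[OF n])
    moreover have "\<gamma> + (\<Sum>i<n. (D (\<omega> i) - ED) * (Z (\<omega> i) - p) - \<gamma>) / real n = (\<Sum>i<n. (D (\<omega> i) - ED) * (Z (\<omega> i) - p)) / real n"
    proof -
      have "(\<Sum>i<n. (D (\<omega> i) - ED) * (Z (\<omega> i) - p) - \<gamma>) = (\<Sum>i<n. (D (\<omega> i) - ED) * (Z (\<omega> i) - p)) - real n * \<gamma>"
        by (simp add: sum_subtractf)
      then show ?thesis using n by (simp add: field_simps)
    qed
    ultimately show ?thesis by simp
  qed
  note pl = per_l[OF P c1 c2 c3 c4 c5 g0, where W=W and CY="\<lambda>n \<omega>. samp_cov n (\<lambda>i. Y (\<omega> i)) (\<lambda>i. Z (\<omega> i))"
      and CD="\<lambda>n \<omega>. samp_cov n (\<lambda>i. D (\<omega> i)) (\<lambda>i. Z (\<omega> i))", OF idY idD]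
  show "negl (PiM UNIV (\<lambda>_. P)) (\<lambda>n \<omega>. sqrt (real n) *
           (samp_cov n (\<lambda>i. obsY y0 y1 dt zz (\<omega> i)) (\<lambda>i. Zl zz l (\<omega> i))
            / samp_cov n (\<lambda>i. obsD dt zz (\<omega> i)) (\<lambda>i. Zl zz l (\<omega> i)) - wald P y0 y1 dt zz l)
           - (\<Sum>i<n. infl P y0 y1 dt zz l (\<omega> i)) / (cov P (obsD dt zz) (Zl zz l) * sqrt (real n)))"
    using pl(1) unfolding Y_def D_def Z_def W_def \<gamma>_def .
  show "negl (PiM UNIV (\<lambda>_. P)) (\<lambda>n \<omega>.
           samp_cov n (\<lambda>i. obsY y0 y1 dt zz (\<omega> i)) (\<lambda>i. Zl zz l (\<omega> i))
            / samp_cov n (\<lambda>i. obsD dt zz (\<omega> i)) (\<lambda>i. Zl zz l (\<omega> i)) - wald P y0 y1 dt zz l)"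
    using pl(2) unfolding Y_def D_def Z_def W_def .
qed

end

theorem proposition10:
  fixes P :: "'u measure" and L :: nat
    and y0 y1 :: "'u \<Rightarrow> real" and dt :: "'u \<Rightarrow> nat set \<Rightarrow> bool"
    and zz :: "'u \<Rightarrow> nat set" and w :: "nat \<Rightarrow> real"
  assumes P: "prob_space P"
    and L: "L \<ge> 2"
    and zz_range: "\<forall>u \<in> space P. zz u \<subseteq> {..<L}"
    and A1: "(\<lambda>u. (y0 u, y1 u, restrict (dt u) (Pow {..<L})))
               \<in> measurable P (borel \<Otimes>\<^sub>M borel \<Otimes>\<^sub>M count_space UNIV)
             \<and> zz \<in> measurable P (count_space UNIV)
             \<and> prob_space.indep_set P
                 (gen_sigma P (borel \<Otimes>\<^sub>M borel \<Otimes>\<^sub>M count_space UNIV)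
                    (\<lambda>u. (y0 u, y1 u, restrict (dt u) (Pow {..<L}))))
                 (gen_sigma P (count_space UNIV) zz)"
    and A2: "\<forall>u \<in> space P. \<forall>S T. S \<subseteq> T \<and> T \<subseteq> {..<L} \<longrightarrow> dt u S \<longrightarrow> dt u T"
    and A3_p: "\<forall>l<L. p_inst P zz l > 0"
    and A3_pi: "\<forall>l<L. mean_diff P zz (obsD dt zz) l > 0"
    and A3_Sigma: "\<forall>a :: nat \<Rightarrow> real. (\<exists>l<L. a l \<noteq> 0) \<longrightarrow>
                     (\<Sum>l<L. \<Sum>k<L. a l * a k * cov P (Zl zz l) (Zl zz k)) > 0"
    and Y2: "integrable P (\<lambda>u. (obsY y0 y1 dt zz u)\<^sup>2)"
    and w_simplex: "(\<forall>l<L. w l \<ge> 0) \<and> (\<Sum>l<L. w l) = 1"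
  shows "conv_in_prob (PiM UNIV (\<lambda>_. P)) (\<lambda>n. beta_RT L w y0 y1 dt zz n)
           (\<Sum>l<L. w l * wald P y0 y1 dt zz l)
       \<and> weak_conv_m
           (\<lambda>n. distr (PiM UNIV (\<lambda>_. P)) borel
              (\<lambda>\<omega>. sqrt (real n) * (beta_RT L w y0 y1 dt zz n \<omega>
                                        - (\<Sum>l<L. w l * wald P y0 y1 dt zz l))))
           (normal_measure (\<Sum>l<L. \<Sum>k<L. w l * w k * Gamma_wald P y0 y1 dt zz l k))"
proof -
  interpret Pp: prob_space P by (rule P)
  let ?M = "PiM UNIV (\<lambda>_. P)"
  interpret M: prob_space ?M using P by (intro prob_space_PiM) auto
  have A1m: "(\<lambda>u. (y0 u, y1 u, restrict (dt u) (Pow {..<L}))) \<in> measurable P (borel \<Otimes>\<^sub>M borel \<Otimes>\<^sub>M count_space UNIV)"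
    and zzm: "zz \<in> measurable P (count_space UNIV)" using A1 by auto
  note mm = meas_model[OF A1m zzm zz_range]
  have Zm: "\<And>l. Zl zz l \<in> borel_measurable P" by (rule mm(1))
  have Dm: "obsD dt zz \<in> borel_measurable P" by (rule mm(2))
  have Ym: "obsY y0 y1 dt zz \<in> borel_measurable P" by (rule mm(3))
  have pfacts: "p_inst P zz l > 0" "p_inst P zz l < 1" "mean_diff P zz (obsD dt zz) l > 0" if "l < L" for l
    using A3_p A3_pi that p_lt1[OF P Zm Dm Ym Y2 A3_Sigma that] by auto
  have PL2: "(\<integral>u. infl P y0 y1 dt zz l u \<partial>P) = 0" if "l < L" for l
    by (rule per_l_model(2)[OF P Zm Dm Ym Y2 pfacts[OF that]])
  define \<gamma> where "\<gamma> = (\<lambda>l. cov P (obsD dt zz) (Zl zz l))"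
  define W where "W = (\<lambda>l. wald P y0 y1 dt zz l)"
  define bh where "bh = (\<lambda>l n (\<omega>::nat \<Rightarrow> 'u). samp_cov n (\<lambda>i. obsY y0 y1 dt zz (\<omega> i)) (\<lambda>i. Zl zz l (\<omega> i))
            / samp_cov n (\<lambda>i. obsD dt zz (\<omega> i)) (\<lambda>i. Zl zz l (\<omega> i)))"
  define \<beta> where "\<beta> = (\<Sum>l<L. w l * wald P y0 y1 dt zz l)"
  define \<psi> where "\<psi> = (\<lambda>u. \<Sum>l<L. w l / \<gamma> l * infl P y0 y1 dt zz l u)"
  define R where "R = (\<lambda>l n (\<omega>::nat \<Rightarrow> 'u). sqrt (real n) * (bh l n \<omega> - W l) - (\<Sum>i<n. infl P y0 y1 dt zz l (\<omega> i)) / (\<gamma> l * sqrt (real n)))"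
  have negR: "negl ?M (R l)" if "l < L" for l unfolding R_def bh_def W_def \<gamma>_def by (rule per_l_model(3)[OF P Zm Dm Ym Y2 pfacts[OF that]])
  have negB: "negl ?M (\<lambda>n \<omega>. bh l n \<omega> - W l)" if "l < L" for l unfolding bh_def W_def by (rule per_l_model(4)[OF P Zm Dm Ym Y2 pfacts[OF that]])
  have beta_eq: "beta_RT L w y0 y1 dt zz n \<omega> - \<beta> = (\<Sum>l<L. w l * (bh l n \<omega> - W l))" for n \<omega>
    unfolding beta_RT_def \<beta>_def bh_def W_def by (simp add: sum_subtractf right_diff_distrib)
  have fin: "finite_measure ?M" by unfold_locales
  have "negl ?M (\<lambda>n \<omega>. \<Sum>l\<in>{..<L}. w l * (bh l n \<omega> - W l))"
    by (rule negl_sum[OF fin]) (use negB in auto)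
  then have "negl ?M (\<lambda>n \<omega>. beta_RT L w y0 y1 dt zz n \<omega> - \<beta>)" unfolding beta_eq .
  then have partA: "conv_in_prob ?M (\<lambda>n. beta_RT L w y0 y1 dt zz n) \<beta>"
    by (rule negl_conv_in_prob[OF fin])
  define Yn where "Yn = (\<lambda>n \<omega>. sqrt (real n) * (beta_RT L w y0 y1 dt zz n \<omega> - \<beta>))"
  define Tn where "Tn = (\<lambda>n (\<omega>::nat \<Rightarrow> 'u). (\<Sum>i<n. \<psi> (\<omega> i)) / sqrt (real n))"
  have Tn_eq: "Tn n \<omega> = (\<Sum>l<L. w l * ((\<Sum>i<n. infl P y0 y1 dt zz l (\<omega> i)) / (\<gamma> l * sqrt (real n))))" for n \<omega>
  proof -
    have "(\<Sum>i<n. \<psi> (\<omega> i)) = (\<Sum>l<L. w l / \<gamma> l * (\<Sum>i<n. infl P y0 y1 dt zz l (\<omega> i)))"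
      unfolding \<psi>_def by (subst sum.swap) (simp add: sum_distrib_left)
    moreover have t: "\<And>a b c s::real. a / b * c / s = a * (c / (b * s))" by simp
    ultimately show ?thesis unfolding Tn_def by (simp only: sum_divide_distrib t)
  qed
  have YT: "Yn n \<omega> - Tn n \<omega> = (\<Sum>l<L. w l * R l n \<omega>)" for n \<omega>
    unfolding Yn_def Tn_eq beta_eq R_def
    by (simp add: sum_distrib_left sum_subtractf right_diff_distrib mult.left_commute)
  have negYT: "negl ?M (\<lambda>n \<omega>. Yn n \<omega> - Tn n \<omega>)"
    unfolding YT by (rule negl_sum[OF fin]) (use negR in auto)
  have [measurable]: "obsY y0 y1 dt zz \<in> borel_measurable P" "obsD dt zz \<in> borel_measurable P"
    "\<And>l. Zl zz l \<in> borel_measurable P" using Ym Dm Zm by auto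
  have Ynm: "Yn n \<in> borel_measurable ?M" for n
    unfolding Yn_def beta_RT_def samp_cov_def by measurable
  have sqi_psi: "sqi P \<psi>"
    unfolding \<psi>_def by (intro sqi_sum sqi_cmult sqi_infl[OF P Zm Dm Ym Y2] P) auto
  have psim[measurable]: "\<psi> \<in> borel_measurable P" using sqi_psi by (simp add: sqi_def)
  have psi0: "(\<integral>u. \<psi> u \<partial>P) = 0"
  proof -
    have "(\<integral>u. \<psi> u \<partial>P) = (\<Sum>l<L. w l / \<gamma> l * (\<integral>u. infl P y0 y1 dt zz l u \<partial>P))"
      unfolding \<psi>_def using sqi_int[OF P sqi_infl[OF P Zm Dm Ym Y2]] by simp
    also have "\<dots> = 0" using PL2 by simp
    finally show ?thesis .
  qed
  have Tnm: "Tn n \<in> borel_measurable ?M" for n unfolding Tn_def by measurable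
  define v where "v = (\<Sum>l<L. \<Sum>k<L. w l * w k * Gamma_wald P y0 y1 dt zz l k)"
  have Gam: "Gamma_wald P y0 y1 dt zz l k = (\<integral>u. infl P y0 y1 dt zz l u * infl P y0 y1 dt zz k u \<partial>P) / (\<gamma> l * \<gamma> k)" for l k
    unfolding Gamma_wald_def Let_def infl_def epsf_def \<gamma>_def by (simp add: ac_simps)
  have v_eq: "v = (\<integral>u. (\<psi> u)\<^sup>2 \<partial>P)"
  proof -
    have ii: "integrable P (\<lambda>u. infl P y0 y1 dt zz l u * infl P y0 y1 dt zz k u)" for l k
      by (rule sqi_prod_int[OF sqi_infl[OF P Zm Dm Ym Y2] sqi_infl[OF P Zm Dm Ym Y2]])
    have sq: "(\<psi> u)\<^sup>2 = (\<Sum>l<L. \<Sum>k<L. (w l / \<gamma> l * (w k / \<gamma> k)) * (infl P y0 y1 dt zz l u * infl P y0 y1 dt zz k u))" for u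
      unfolding \<psi>_def power2_eq_square sum_product by (simp add: ac_simps)
    have "(\<integral>u. (\<psi> u)\<^sup>2 \<partial>P) = (\<Sum>l<L. (\<integral>u. (\<Sum>k<L. (w l / \<gamma> l * (w k / \<gamma> k)) * (infl P y0 y1 dt zz l u * infl P y0 y1 dt zz k u)) \<partial>P))"
      unfolding sq by (rule Bochner_Integration.integral_sum) (use ii in auto)
    also have "\<dots> = (\<Sum>l<L. \<Sum>k<L. (w l / \<gamma> l * (w k / \<gamma> k)) * (\<integral>u. infl P y0 y1 dt zz l u * infl P y0 y1 dt zz k u \<partial>P))"
      by (intro sum.cong refl, subst Bochner_Integration.integral_sum) (use ii in auto)
    also have "\<dots> = v" unfolding v_def Gam by (intro sum.cong refl) (simp add: field_simps)
    finally show ?thesis by simp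
  qed
  have v0: "v \<ge> 0" unfolding v_eq by simp
  have Yn_def': "(\<lambda>n. distr ?M borel (\<lambda>\<omega>. sqrt (real n) * (beta_RT L w y0 y1 dt zz n \<omega> - (\<Sum>l<L. w l * wald P y0 y1 dt zz l))))
      = (\<lambda>n. distr ?M borel (Yn n))" unfolding Yn_def \<beta>_def ..
  have partB: "weak_conv_m (\<lambda>n. distr ?M borel (Yn n)) (normal_measure v)"
  proof (cases "v = 0")
    case True
    have negT: "negl ?M Tn"
      unfolding negl_def
    proof (intro allI impI)
      fix e \<delta> :: real assume e: "e > 0" and d: "\<delta> > 0"
      have "\<exists>B\<in>sets ?M. {x \<in> space ?M. e < \<bar>Tn n x\<bar>} \<subseteq> B \<and> measure ?M B \<le> \<delta>" if n: "n \<ge> 1" for n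
      proof -
        define B where "B = {\<omega> \<in> space ?M. \<bar>\<Sum>i<n. \<psi> (\<omega> i)\<bar> \<ge> e * sqrt (real n)}"
        have Bm: "B \<in> sets ?M" unfolding B_def by measurable
        have sn: "sqrt (real n) > 0" using n by simp
        have "measure ?M B \<le> real n * (\<integral>u. (\<psi> u)\<^sup>2 \<partial>P) / (e * sqrt (real n))\<^sup>2"
          unfolding B_def by (rule sum_cheb[OF P]) (use sqi_psi psi0 e sn in \<open>auto simp: sqi_def\<close>)
        then have "measure ?M B \<le> \<delta>" using True v_eq d by simp
        moreover have "{x \<in> space ?M. e < \<bar>Tn n x\<bar>} \<subseteq> B"
        proof
          fix x assume x: "x \<in> {x \<in> space ?M. e < \<bar>Tn n x\<bar>}"
          then have "e < \<bar>\<Sum>i<n. \<psi> (x i)\<bar> / sqrt (real n)" unfolding Tn_def by (simp add: abs_div)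
          then have "e * sqrt (real n) < \<bar>\<Sum>i<n. \<psi> (x i)\<bar>" using sn by (simp add: pos_less_divide_eq)
          then show "x \<in> B" using x unfolding B_def by simp
        qed
        ultimately show ?thesis using Bm by blast
      qed
      then show "\<exists>N. \<forall>n\<ge>N. \<exists>B\<in>sets ?M. {x \<in> space ?M. e < \<bar>Tn n x\<bar>} \<subseteq> B \<and> measure ?M B \<le> \<delta>" by blast
    qed
    have "negl ?M (\<lambda>n \<omega>. Tn n \<omega> + (Yn n \<omega> - Tn n \<omega>))" by (rule negl_add[OF fin negT negYT])
    then have "negl ?M Yn" by simp
    then have "weak_conv_m (\<lambda>n. distr ?M borel (Yn n)) (return borel 0)"
      by (rule weak_conv_point0[OF M.prob_space_axioms Ynm])
    then show ?thesis using True by (simp add: normal_measure_def)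
  next
    case False
    then have vp: "v > 0" using v0 by simp
    define \<sigma> where "\<sigma> = sqrt v"
    have sp: "\<sigma> > 0" unfolding \<sigma>_def using vp by simp
    have s2: "\<sigma>\<^sup>2 = v" unfolding \<sigma>_def using vp by simp
    define X where "X = (\<lambda>i (\<omega>::nat \<Rightarrow> 'u). \<psi> (\<omega> i))"
    have Xind: "M.indep_vars (\<lambda>i. borel) X UNIV"
      unfolding X_def by (rule M.indep_vars_compose2[OF coord_indep_vars[OF P]]) simp
    have Xint: "(\<integral>\<omega>. X n \<omega> \<partial>?M) = 0" for n
      unfolding X_def using coord_integral(1)[OF P psim, of n] psi0 by simp
    have psi2m: "(\<lambda>u. (\<psi> u)\<^sup>2) \<in> borel_measurable P" by measurable
    have Xsq: "integrable ?M (\<lambda>x. (X n x)\<^sup>2)" for n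
      unfolding X_def using coord_integral(2)[OF P psi2m] sqi_psi by (simp add: sqi_def)
    have Xvar: "M.variance (X n) = \<sigma>\<^sup>2" for n
      using Xint[of n] coord_integral(1)[OF P psi2m, of n] unfolding s2 v_eq X_def by simp
    have Xdist: "distr ?M borel (X n) = distr P borel \<psi>" for n
    proof -
      have "distr (distr ?M P (\<lambda>\<omega>. \<omega> n)) borel \<psi> = distr ?M borel (\<psi> \<circ> (\<lambda>\<omega>. \<omega> n))"
      proof (rule distr_distr)
        show "\<psi> \<in> borel_measurable P" by (rule psim)
        show "(\<lambda>\<omega>. \<omega> n) \<in> measurable ?M P" using measurable_component_singleton[of n UNIV "\<lambda>_. P"] by simp
      qed
      then show ?thesis unfolding coord_distr[OF P] X_def by (simp add: comp_def)
    qed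
    have clt: "weak_conv_m (\<lambda>n. distr ?M borel (\<lambda>x. (\<Sum>i<n. X i x) / sqrt (real n * \<sigma>\<^sup>2))) std_normal_distribution"
      by (rule M.central_limit_theorem_zero_mean[OF Xind Xint sp Xsq Xvar Xdist])
    have X'm: "(\<lambda>x. (\<Sum>i<n. X i x) / sqrt (real n * \<sigma>\<^sup>2)) \<in> borel_measurable ?M" for n
      unfolding X_def by measurable
    have sc: "weak_conv_m (\<lambda>n. distr ?M borel (\<lambda>\<omega>. \<sigma> * ((\<Sum>i<n. X i \<omega>) / sqrt (real n * \<sigma>\<^sup>2)))) (normal_measure (\<sigma>\<^sup>2))"
      by (rule weak_conv_scale[OF sp X'm clt])
    have eqT: "\<sigma> * ((\<Sum>i<n. X i \<omega>) / sqrt (real n * \<sigma>\<^sup>2)) = Tn n \<omega>" for n \<omega>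
      unfolding Tn_def X_def using sp by (simp add: real_sqrt_mult)
    have X''m: "(\<lambda>\<omega>. \<sigma> * ((\<Sum>i<n. X i \<omega>) / sqrt (real n * \<sigma>\<^sup>2))) \<in> borel_measurable ?M" for n
      unfolding X_def by measurable
    have "weak_conv_m (\<lambda>n. distr ?M borel (Yn n)) (normal_measure (\<sigma>\<^sup>2))"
      by (rule slutsky[OF M.prob_space_axioms X''m Ynm normal_cdf_cont[OF sp] sc]) (unfold eqT, rule negYT)
    then show ?thesis unfolding s2 .
  qed
  show ?thesis
    unfolding Yn_def' using partA partB unfolding \<beta>_def v_def by simp
qed


end
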